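(* Let $\mathbf s$ be a parity sequence for $\mathfrak{gl}_{m|n}$ and let $\mathbf s'$ be the parity sequence (for $\mathfrak{gl}_{n|m}$) defined by $s'_i=-s_{1-i}$ for all $i\in\mathbb Z$. Then there is an isomorphism of superalgebras $$\tau_{\mathbf s}:\ \mathcal E_{\mathbf s}(q_1,q_2,q_3)\to\mathcal E_{\mathbf s'}(q_3^{-1},q_2^{-1},q_1^{-1}),$$ given (coefficientwise in the generating series) by $$E_i(z)\mapsto E_{-i}(z),\qquad F_i(z)\mapsto -F_{-i}(z),\qquad K_i^\pm(z)\mapsto K_{-i}^\pm(z)\qquad(i\in\hat I).$$
   Context: Fix integers $m,n\ge 0$ with $m\ne n$ and $N=m+n\ge 3$. A parity sequence is $\mathbf s=(s_1,\dots,s_N)\in\{1,-1\}^N$ with exactly $m$ entries equal to $1$, extended to $(s_i)_{i\in\mathbb Z}$ by $s_{i+N}=s_i$. Let $\hat I=\{0,1,\dots,N-1\}$, indices always taken modulo $N$. For $i\in\hat I$ put $|i|=(1-s_is_{i+1})/2$. Define $A_{i,j}=(s_i+s_{i+1})\delta_{i,j}-s_i\delta_{i,j+1}-s_j\delta_{i+1,j}$ and $M_{i,j}$ by $M_{i+1,i}=-M_{i,i+1}=s_{i+1}$ and $M_{i,j}=0$ if $i\ne j\pm1$ ($i,j\in\hat I$). Let $\hat Q$ be the free abelian group on $\alpha_i$ ($i\in\hat I$) with symmetric bilinear form $\langle\alpha_i,\alpha_j\rangle=A_{i,j}$. Fix $d,q\in\mathbb C^\times$, put $q_1=dq^{-1}$,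 $q_2=q^2$, $q_3=d^{-1}q^{-1}$, and assume $q_1^aq_2^bq_3^c=1$ ($a,b,c\in\mathbb Z$) only if $a=b=c$. Let $\delta(z)=\sum_{n\in\mathbb Z}z^n$. $\mathcal E_{\mathbf s}=\mathcal E_{\mathbf s}(q_1,q_2,q_3)$ is the unital associative superalgebra generated by $E_{i,r},F_{i,r},H_{i,r'}$ and invertible $K_i$ ($i\in\hat I$, $r,r'\in\mathbb Z$, $r'\ne0$), with $|E_{i,r}|=|F_{i,r}|=|i|$ and all other generators even. Write $E_i(z)=\sum_kE_{i,k}z^{-k}$, $F_i(z)=\sum_kF_{i,k}z^{-k}$, $K_i^\pm(z)=K_i^{\pm1}\exp\big(\pm(q-q^{-1})\sum_{r>0}H_{i,\pm r}z^{\mp r}\big)$. Let $[X,Y]=XY-(-1)^{|X||Y|}YX$, and for homogeneous $X,Y$ of $\hat Q$-weights $\alpha,\beta$ (where $E_{i,r}$ has weight $\alpha_i$, $F_{i,r}$ weight $-\alpha_i$, $K_i,H_{i,r}$ weight $0$) let $[\![X,Y]\!]=XY-(-1)^{|X||Y|}q^{\langle\alpha,\beta\rangle}YX$. The defining relations are, for all $i,j\in\hat I$: (1) $K_iK_j=K_jK_i$, $K_iE_j(z)K_i^{-1}=q^{A_{i,j}}E_j(z)$, $K_iF_j(z)K_i^{-1}=q^{-A_{i,j}}F_j(z)$; (2) $K_i^\pm(z)K_j^\pm(w)=K_j^\pm(w)K_i^\pm(z)$, $K_i^-(z)K_j^+(w)=K_j^+(w)K_i^-(z)$; (3) $(d^{M_{i,j}}z-q^{A_{i,j}}w)K_i^\pm(z)E_j(w)=(d^{M_{i,j}}q^{A_{i,j}}z-w)E_j(w)K_i^\pm(z)$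 and $(d^{M_{i,j}}z-q^{-A_{i,j}}w)K_i^\pm(z)F_j(w)=(d^{M_{i,j}}q^{-A_{i,j}}z-w)F_j(w)K_i^\pm(z)$; (4) $[E_i(z),F_j(w)]=\frac{\delta_{i,j}}{q-q^{-1}}\big(\delta(w/z)K_i^+(w)-\delta(z/w)K_i^-(z)\big)$; (5) if $A_{i,j}=0$: $[E_i(z),E_j(w)]=0=[F_i(z),F_j(w)]$; if $A_{i,j}\ne0$: $(d^{M_{i,j}}z-q^{A_{i,j}}w)E_i(z)E_j(w)=(-1)^{|i||j|}(d^{M_{i,j}}q^{A_{i,j}}z-w)E_j(w)E_i(z)$ and $(d^{M_{i,j}}z-q^{-A_{i,j}}w)F_i(z)F_j(w)=(-1)^{|i||j|}(d^{M_{i,j}}q^{-A_{i,j}}z-w)F_j(w)F_i(z)$; (6) if $A_{i,i}\ne0$: $\mathrm{Sym}_{z_1,z_2}[\![E_i(z_1),[\![E_i(z_2),E_{i\pm1}(w)]\!]]\!]=0$ and the same with $F$ in place of $E$; if $mn\ne2$ and $A_{i,i}=0$: $\mathrm{Sym}_{z_1,z_2}[\![E_i(z_1),[\![E_{i+1}(w_1),[\![E_i(z_2),E_{i-1}(w_2)]\!]]\!]]\!]=0$ and the same with $F$; if $mn=2$ and $A_{i,i}\ne0$: $\mathrm{Sym}_{z_1,z_2}\mathrm{Sym}_{w_1,w_2}[\![E_{i-1}(z_1),[\![E_{i+1}(w_1),[\![E_{i-1}(z_2),[\![E_{i+1}(w_2),E_i(y)]\!]]\!]]\!]]\!]=\mathrm{Sym}_{z_1,z_2}\mathrm{Sym}_{w_1,w_2}[\![E_{i+1}(w_1),[\![E_{i-1}(z_1),[\![E_{i+1}(w_2),[\![E_{i-1}(z_2),E_i(y)]\!]]\!]]\!]]\!]$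 and the same with $F$. The algebra $\mathcal E_{\mathbf s'}(q_3^{-1},q_2^{-1},q_1^{-1})$ is defined in the same way with $(m,n)$ replaced by $(n,m)$, $\mathbf s$ by $\mathbf s'$, and $(q_1,q_2,q_3)$ replaced by $(q_3^{-1},q_2^{-1},q_1^{-1})$ (i.e. $(d,q)$ replaced by $(d,q^{-1})$). *)

theory Defs
  imports Complex_Main
begin

text \<open>Generators: GE i r = E_{i,r}, GF i r = F_{i,r}, GH i r = H_{i,r}, GK i = K_i,
  GKi i = K_i^{-1}.  Only indices i in {0..N-1} (and r nonzero for H) are admitted.\<close>

datatype gen = GE int int | GF int int | GH int int | GK int | GKi int

text \<open>Elements of the free algebra: coefficient functions on words (finitely supported
  ones are the noncommutative polynomials, see fpoly).\<close>
type_synonym fa = "gen list \<Rightarrow> complex"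

definition fzero :: fa where "fzero = (\<lambda>w. 0)"
definition fone :: fa where "fone = (\<lambda>w. if w = [] then 1 else 0)"
definition fgen :: "gen \<Rightarrow> fa" where "fgen g = (\<lambda>w. if w = [g] then 1 else 0)"
definition fadd :: "fa \<Rightarrow> fa \<Rightarrow> fa" where "fadd x y = (\<lambda>w. x w + y w)"
definition fsub :: "fa \<Rightarrow> fa \<Rightarrow> fa" where "fsub x y = (\<lambda>w. x w - y w)"
definition fsmul :: "complex \<Rightarrow> fa \<Rightarrow> fa" where "fsmul c x = (\<lambda>w. c * x w)"
definition fmul :: "fa \<Rightarrow> fa \<Rightarrow> fa" where
  "fmul x y = (\<lambda>w. \<Sum>k\<le>length w. x (take k w) * y (drop k w))"
definition fsum :: "('a \<Rightarrow> fa) \<Rightarrow> 'a set \<Rightarrow> fa" where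
  "fsum f A = (\<lambda>w. \<Sum>a\<in>A. f a w)"

definition fsuml :: "('a \<Rightarrow> fa) \<Rightarrow> 'a list \<Rightarrow> fa" where
  "fsuml f xs = (\<lambda>w. \<Sum>x\<leftarrow>xs. f x w)"

definition valid_gen :: "nat \<Rightarrow> gen \<Rightarrow> bool" where
  "valid_gen N g = (case g of
      GE i r \<Rightarrow> 0 \<le> i \<and> i < int N
    | GF i r \<Rightarrow> 0 \<le> i \<and> i < int N
    | GH i r \<Rightarrow> 0 \<le> i \<and> i < int N \<and> r \<noteq> 0
    | GK i \<Rightarrow> 0 \<le> i \<and> i < int N
    | GKi i \<Rightarrow> 0 \<le> i \<and> i < int N)"

definition fpoly :: "nat \<Rightarrow> fa \<Rightarrow> bool" where
  "fpoly N x \<longleftrightarrow> finite {w. x w \<noteq> 0} \<and> (\<forall>w. x w \<noteq> 0 \<longrightarrow> (\<forall>g\<in>set w. valid_gen N g))"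

inductive_set tsideal :: "nat \<Rightarrow> fa set \<Rightarrow> fa set" for N R where
  zero: "fzero \<in> tsideal N R"
| add: "x \<in> tsideal N R \<Longrightarrow> y \<in> tsideal N R \<Longrightarrow> fadd x y \<in> tsideal N R"
| gen: "r \<in> R \<Longrightarrow> fpoly N a \<Longrightarrow> fpoly N b \<Longrightarrow> fmul a (fmul r b) \<in> tsideal N R"

fun wimg :: "(gen \<Rightarrow> fa) \<Rightarrow> gen list \<Rightarrow> fa" where
  "wimg f [] = fone"
| "wimg f (g # u) = fmul (f g) (wimg f u)"

definition fext :: "(gen \<Rightarrow> fa) \<Rightarrow> fa \<Rightarrow> fa" where
  "fext f x = (\<lambda>w. \<Sum>u\<in>{u. x u \<noteq> 0}. x u * wimg f u w)"

definition sA :: "(int \<Rightarrow> int) \<Rightarrow> nat \<Rightarrow> int \<Rightarrow> int \<Rightarrow> int" where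
  "sA s N i j =
     (s i + s (i + 1)) * (if i mod int N = j mod int N then 1 else 0)
     - s i * (if i mod int N = (j + 1) mod int N then 1 else 0)
     - s j * (if (i + 1) mod int N = j mod int N then 1 else 0)"

definition sM :: "(int \<Rightarrow> int) \<Rightarrow> nat \<Rightarrow> int \<Rightarrow> int \<Rightarrow> int" where
  "sM s N i j =
     (if i mod int N = (j + 1) mod int N then s i
      else if (i + 1) mod int N = j mod int N then - s j else 0)"

definition spar :: "(int \<Rightarrow> int) \<Rightarrow> int \<Rightarrow> int" where
  "spar s i = (1 - s i * s (i + 1)) div 2"

definition gpar :: "(int \<Rightarrow> int) \<Rightarrow> gen \<Rightarrow> int" where
  "gpar s g = (case g of GE i r \<Rightarrow> spar s i | GF i r \<Rightarrow> spar s i | _ \<Rightarrow> 0)"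

definition wpar :: "(int \<Rightarrow> int) \<Rightarrow> gen list \<Rightarrow> int" where
  "wpar s w = (\<Sum>g\<leftarrow>w. gpar s g) mod 2"

definition homog :: "(int \<Rightarrow> int) \<Rightarrow> int \<Rightarrow> fa \<Rightarrow> bool" where
  "homog s p y \<longleftrightarrow> (\<forall>w. y w \<noteq> 0 \<longrightarrow> wpar s w = p mod 2)"

definition sgn2 :: "int \<Rightarrow> int \<Rightarrow> complex" where
  "sgn2 a b = (-1) ^ nat (a * b)"

text \<open>A weight is a coefficient function on the simple roots alpha_0..alpha_{N-1}.\<close>
definition bform :: "(int \<Rightarrow> int) \<Rightarrow> nat \<Rightarrow> (int \<Rightarrow> int) \<Rightarrow> (int \<Rightarrow> int) \<Rightarrow> int" where
  "bform s N x y = (\<Sum>j\<in>{0..<int N}. \<Sum>k\<in>{0..<int N}. x j * y k * sA s N j k)"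

definition unitw :: "int \<Rightarrow> int \<Rightarrow> int" where
  "unitw i = (\<lambda>j. if j = i then 1 else 0)"

text \<open>Homogeneous element: (element, parity, weight).\<close>
type_synonym hel = "fa \<times> int \<times> (int \<Rightarrow> int)"

definition qbr :: "(int \<Rightarrow> int) \<Rightarrow> nat \<Rightarrow> complex \<Rightarrow> hel \<Rightarrow> hel \<Rightarrow> hel" where
  "qbr s N q X Y = (case X of (x, px, wx) \<Rightarrow> case Y of (y, py, wy) \<Rightarrow>
     (fsub (fmul x y) (fsmul (sgn2 px py * q powi bform s N wx wy) (fmul y x)),
      px + py, (\<lambda>k. wx k + wy k)))"

definition qE :: "(int \<Rightarrow> int) \<Rightarrow> nat \<Rightarrow> int \<Rightarrow> int \<Rightarrow> hel" where
  "qE s N i a = (fgen (GE (i mod int N) a), spar s i, unitw (i mod int N))"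

definition qF :: "(int \<Rightarrow> int) \<Rightarrow> nat \<Rightarrow> int \<Rightarrow> int \<Rightarrow> hel" where
  "qF s N i a = (fgen (GF (i mod int N) a), spar s i, (\<lambda>k. - unitw (i mod int N) k))"

text \<open>For X = sum_{r>=1} a_r x^r, xpow a j n is the coefficient of x^n in X^j
  (noncommutative), and expc a n the coefficient of x^n in exp(X) = sum_j X^j/j!.\<close>
fun xpow :: "(nat \<Rightarrow> fa) \<Rightarrow> nat \<Rightarrow> nat \<Rightarrow> fa" where
  "xpow a 0 n = (if n = 0 then fone else fzero)"
| "xpow a (Suc j) n = fsum (\<lambda>r. fmul (a r) (xpow a j (n - r))) {1..n}"

definition expc :: "(nat \<Rightarrow> fa) \<Rightarrow> nat \<Rightarrow> fa" where
  "expc a n = fsum (\<lambda>j. fsmul (1 / of_nat (fact j)) (xpow a j n)) {0..n}"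

text \<open>Kplus q N i t = coefficient of z^{-t} in K_i^+(z); Kminus likewise for K_i^-(z).\<close>
definition Kplus :: "complex \<Rightarrow> nat \<Rightarrow> int \<Rightarrow> int \<Rightarrow> fa" where
  "Kplus q N i t = (if t < 0 then fzero else
     fmul (fgen (GK (i mod int N)))
          (expc (\<lambda>r. fsmul (q - inverse q) (fgen (GH (i mod int N) (int r)))) (nat t)))"

definition Kminus :: "complex \<Rightarrow> nat \<Rightarrow> int \<Rightarrow> int \<Rightarrow> fa" where
  "Kminus q N i t = (if 0 < t then fzero else
     fmul (fgen (GKi (i mod int N)))
          (expc (\<lambda>r. fsmul (- (q - inverse q)) (fgen (GH (i mod int N) (- int r)))) (nat (- t))))"

definition Ec :: "nat \<Rightarrow> int \<Rightarrow> int \<Rightarrow> fa" where "Ec N i a = fgen (GE (i mod int N) a)"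
definition Fc :: "nat \<Rightarrow> int \<Rightarrow> int \<Rightarrow> fa" where "Fc N i a = fgen (GF (i mod int N) a)"
definition Kc :: "nat \<Rightarrow> int \<Rightarrow> fa" where "Kc N i = fgen (GK (i mod int N))"
definition Kic :: "nat \<Rightarrow> int \<Rightarrow> fa" where "Kic N i = fgen (GKi (i mod int N))"

text \<open>Coefficient of z^{-a} w^{-b} in
  (c1 z - c2 w) X(z) Y(w) - sg (c3 z - c4 w) Y(w) X(z), where X(z) = sum_k X_k z^{-k}.\<close>
definition rel3 :: "complex \<Rightarrow> complex \<Rightarrow> complex \<Rightarrow> complex \<Rightarrow> complex \<Rightarrow>
    (int \<Rightarrow> fa) \<Rightarrow> (int \<Rightarrow> fa) \<Rightarrow> int \<Rightarrow> int \<Rightarrow> fa" where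
  "rel3 c1 c2 c3 c4 sg X Y a b =
     fsub (fsub (fsmul c1 (fmul (X (a + 1)) (Y b))) (fsmul c2 (fmul (X a) (Y (b + 1)))))
          (fsmul sg (fsub (fsmul c3 (fmul (Y b) (X (a + 1)))) (fsmul c4 (fmul (Y (b + 1)) (X a)))))"

definition scomm :: "complex \<Rightarrow> fa \<Rightarrow> fa \<Rightarrow> fa" where
  "scomm sg x y = fsub (fmul x y) (fsmul sg (fmul y x))"

section \<open>Defining relations of E_s(q1,q2,q3) (coefficientwise)\<close>

definition rels :: "(int \<Rightarrow> int) \<Rightarrow> nat \<Rightarrow> nat \<Rightarrow> nat \<Rightarrow> complex \<Rightarrow> complex \<Rightarrow> fa set" where
  "rels s N m n d q =
   (let Ih = {0..<int N}; A = sA s N; M = sM s N; p = spar s;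
        E = Ec N; F = Fc N; Kp = Kplus q N; Km = Kminus q N in
   \<comment> \<open>invertibility of K_i\<close>
   {fsub (fmul (Kc N i) (Kic N i)) fone | i. i \<in> Ih}
   \<union> {fsub (fmul (Kic N i) (Kc N i)) fone | i. i \<in> Ih}
   \<comment> \<open>(1)\<close>
   \<union> {fsub (fmul (Kc N i) (Kc N j)) (fmul (Kc N j) (Kc N i)) | i j. i \<in> Ih \<and> j \<in> Ih}
   \<union> {fsub (fmul (Kc N i) (fmul (E j a) (Kic N i))) (fsmul (q powi A i j) (E j a))
        | i j a. i \<in> Ih \<and> j \<in> Ih}
   \<union> {fsub (fmul (Kc N i) (fmul (F j a) (Kic N i))) (fsmul (q powi (- A i j)) (F j a))
        | i j a. i \<in> Ih \<and> j \<in> Ih}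
   \<comment> \<open>(2)\<close>
   \<union> {fsub (fmul (Kp i a) (Kp j b)) (fmul (Kp j b) (Kp i a)) | i j a b. i \<in> Ih \<and> j \<in> Ih}
   \<union> {fsub (fmul (Km i a) (Km j b)) (fmul (Km j b) (Km i a)) | i j a b. i \<in> Ih \<and> j \<in> Ih}
   \<union> {fsub (fmul (Km i a) (Kp j b)) (fmul (Kp j b) (Km i a)) | i j a b. i \<in> Ih \<and> j \<in> Ih}
   \<comment> \<open>(3)\<close>
   \<union> {rel3 (d powi M i j) (q powi A i j) (d powi M i j * q powi A i j) 1 1 (KX i) (E j) a b
        | i j a b KX. i \<in> Ih \<and> j \<in> Ih \<and> (KX = Kp \<or> KX = Km)}
   \<union> {rel3 (d powi M i j) (q powi (- A i j)) (d powi M i j * q powi (- A i j)) 1 1 (KX i) (F j) a b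
        | i j a b KX. i \<in> Ih \<and> j \<in> Ih \<and> (KX = Kp \<or> KX = Km)}
   \<comment> \<open>(4)\<close>
   \<union> {fsub (scomm (sgn2 (p i) (p j)) (E i a) (F j b))
          (fsmul ((if i = j then 1 else 0) / (q - inverse q)) (fsub (Kp i (a + b)) (Km i (a + b))))
        | i j a b. i \<in> Ih \<and> j \<in> Ih}
   \<comment> \<open>(5)\<close>
   \<union> {scomm (sgn2 (p i) (p j)) (E i a) (E j b) | i j a b. i \<in> Ih \<and> j \<in> Ih \<and> A i j = 0}
   \<union> {scomm (sgn2 (p i) (p j)) (F i a) (F j b) | i j a b. i \<in> Ih \<and> j \<in> Ih \<and> A i j = 0}
   \<union> {rel3 (d powi M i j) (q powi A i j) (d powi M i j * q powi A i j) 1 (sgn2 (p i) (p j))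
          (E i) (E j) a b | i j a b. i \<in> Ih \<and> j \<in> Ih \<and> A i j \<noteq> 0}
   \<union> {rel3 (d powi M i j) (q powi (- A i j)) (d powi M i j * q powi (- A i j)) 1 (sgn2 (p i) (p j))
          (F i) (F j) a b | i j a b. i \<in> Ih \<and> j \<in> Ih \<and> A i j \<noteq> 0}
   \<comment> \<open>(6), first kind: coefficient of z1^{-a} z2^{-b} w^{-c}\<close>
   \<union> {fadd (fst (qbr s N q (G i a) (qbr s N q (G i b) (G (i + e) c))))
           (fst (qbr s N q (G i b) (qbr s N q (G i a) (G (i + e) c))))
        | i e a b c G. i \<in> Ih \<and> A i i \<noteq> 0 \<and> (e = 1 \<or> e = -1) \<and> (G = qE s N \<or> G = qF s N)}
   \<comment> \<open>(6), second kind: coefficient of z1^{-a} z2^{-b} w1^{-c1} w2^{-c2}\<close>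
   \<union> {fadd (fst (qbr s N q (G i a) (qbr s N q (G (i + 1) c1) (qbr s N q (G i b) (G (i - 1) c2)))))
           (fst (qbr s N q (G i b) (qbr s N q (G (i + 1) c1) (qbr s N q (G i a) (G (i - 1) c2)))))
        | i a b c1 c2 G. i \<in> Ih \<and> m * n \<noteq> 2 \<and> A i i = 0 \<and> (G = qE s N \<or> G = qF s N)}
   \<comment> \<open>(6), third kind: coefficient of z1^{-a1} z2^{-a2} w1^{-b1} w2^{-b2} y^{-c}\<close>
   \<union> {fsub
        (fsuml (\<lambda>(x1, x2, y1, y2). fst (qbr s N q (G (i - 1) x1) (qbr s N q (G (i + 1) y1)
              (qbr s N q (G (i - 1) x2) (qbr s N q (G (i + 1) y2) (G i c))))))
           [(a1, a2, b1, b2), (a2, a1, b1, b2), (a1, a2, b2, b1), (a2, a1, b2, b1)])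
        (fsuml (\<lambda>(x1, x2, y1, y2). fst (qbr s N q (G (i + 1) y1) (qbr s N q (G (i - 1) x1)
              (qbr s N q (G (i + 1) y2) (qbr s N q (G (i - 1) x2) (G i c))))))
           [(a1, a2, b1, b2), (a2, a1, b1, b2), (a1, a2, b2, b1), (a2, a1, b2, b1)])
        | i a1 a2 b1 b2 c G. i \<in> Ih \<and> m * n = 2 \<and> A i i \<noteq> 0 \<and> (G = qE s N \<or> G = qF s N)})"

end

theory Submission
  imports Defs
begin


definition fsupp :: "fa \<Rightarrow> gen list set" where "fsupp x = {w. x w \<noteq> 0}"

lemma fzero_app[simp]: "fzero w = 0" by (simp add: fzero_def)
lemma fone_app[simp]: "fone w = (if w = [] then 1 else 0)" by (simp add: fone_def)
lemma fgen_app[simp]: "fgen g w = (if w = [g] then 1 else 0)" by (simp add: fgen_def)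
lemma fadd_app[simp]: "fadd x y w = x w + y w" by (simp add: fadd_def)
lemma fsub_app[simp]: "fsub x y w = x w - y w" by (simp add: fsub_def)
lemma fsmul_app[simp]: "fsmul c x w = c * x w" by (simp add: fsmul_def)
lemma fsum_app[simp]: "fsum f A w = (\<Sum>a\<in>A. f a w)" by (simp add: fsum_def)
lemma fsuml_app[simp]: "fsuml f xs w = (\<Sum>x\<leftarrow>xs. f x w)" by (simp add: fsuml_def)

lemma fmul_Nil[simp]: "fmul x y [] = x [] * y []" by (simp add: fmul_def)
lemma fmul_Cons: "fmul x y (g # w) = x [] * y (g # w) + fmul (\<lambda>u. x (g # u)) y w"
  unfolding fmul_def
  by (simp add: sum.atMost_Suc_shift del: sum.atMost_Suc)

lemma fmul_lin_left: "fmul (\<lambda>u. c * a u + b u) z w = c * fmul a z w + fmul b z w"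
  by (simp add: fmul_def sum.distrib sum_distrib_left algebra_simps)
lemma fmul_lin_right: "fmul z (\<lambda>u. c * a u + b u) w = c * fmul z a w + fmul z b w"
  by (simp add: fmul_def sum.distrib sum_distrib_left algebra_simps)

lemma fmul_assoc: "fmul (fmul x y) z = fmul x (fmul y z)"
proof (rule ext)
  fix w show "fmul (fmul x y) z w = fmul x (fmul y z) w"
  proof (induction w arbitrary: x)
    case Nil then show ?case by simp
  next
    case (Cons g w)
    have e: "(\<lambda>u. fmul x y (g # u)) = (\<lambda>u. x [] * y (g # u) + fmul (\<lambda>u. x (g # u)) y u)"
      by (simp add: fmul_Cons)
    show ?case
      by (simp add: fmul_Cons e fmul_lin_left Cons algebra_simps)
  qed
qed

lemma fmul_fadd_left: "fmul (fadd a b) z = fadd (fmul a z) (fmul b z)"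
  by (rule ext) (simp add: fmul_def sum.distrib algebra_simps fadd_def)
lemma fmul_fadd_right: "fmul z (fadd a b) = fadd (fmul z a) (fmul z b)"
  by (rule ext) (simp add: fmul_def sum.distrib algebra_simps fadd_def)
lemma fmul_fsub_left: "fmul (fsub a b) z = fsub (fmul a z) (fmul b z)"
  by (rule ext) (simp add: fmul_def sum_subtractf algebra_simps fsub_def)
lemma fmul_fsub_right: "fmul z (fsub a b) = fsub (fmul z a) (fmul z b)"
  by (rule ext) (simp add: fmul_def sum_subtractf algebra_simps fsub_def)
lemma fmul_fsmul_left: "fmul (fsmul c a) z = fsmul c (fmul a z)"
  by (rule ext) (simp add: fmul_def sum_distrib_left algebra_simps fsmul_def)
lemma fmul_fsmul_right: "fmul z (fsmul c a) = fsmul c (fmul z a)"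
  by (rule ext) (simp add: fmul_def sum_distrib_left algebra_simps fsmul_def)
lemma fmul_fzero_left[simp]: "fmul fzero z = fzero"
  by (rule ext) (simp add: fmul_def)
lemma fmul_fzero_right[simp]: "fmul z fzero = fzero"
  by (rule ext) (simp add: fmul_def)

lemma fmul_fone_left[simp]: "fmul fone z = z"
proof (rule ext)
  fix w show "fmul fone z w = z w"
    by (cases w) (simp_all add: fmul_Cons fmul_def[of "\<lambda>u. 0"])
qed

lemma fmul_fone_right[simp]: "fmul z fone = z"
proof (rule ext)
  fix w show "fmul z fone w = z w"
  proof (induction w arbitrary: z)
    case Nil then show ?case by simp
  next
    case (Cons g w) then show ?case by (simp add: fmul_Cons)
  qed
qed

declare fone_app[simp del] fgen_app[simp del]


definition fdel :: "gen list \<Rightarrow> fa" where "fdel u = (\<lambda>w. if w = u then 1 else 0)"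
lemma fdel_app[simp]: "fdel u w = (if w = u then 1 else 0)" by (simp add: fdel_def)

lemma fmul_fdel: "fmul (fdel u) (fdel v) = fdel (u @ v)"
proof -
  have "fmul (fdel u) y = (\<lambda>w. if \<exists>t. w = u @ t then y (drop (length u) w) else 0)" for y
  proof (induction u)
    case Nil then show ?case
      using fmul_fone_left[of y] by (simp add: fone_def fdel_def)
  next
    case (Cons g u)
    show ?case
    proof (rule ext)
      fix w show "fmul (fdel (g # u)) y w = (if \<exists>t. w = (g # u) @ t then y (drop (length (g # u)) w) else 0)"
      proof (cases w)
        case Nil then show ?thesis by simp
      next
        case (Cons h w')
        have "(\<lambda>t. fdel (g # u) (h # t)) = (if h = g then fdel u else fzero)"
          by (auto simp: fdel_def fzero_def fun_eq_iff)
        then show ?thesis using Cons Cons.IH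
          by (auto simp: fmul_Cons fmul_def[of fzero] fdel_app)
      qed
    qed
  qed
  then show ?thesis by (auto simp: fdel_def fun_eq_iff)
qed

lemma fun_as_sum: "finite S \<Longrightarrow> fsupp x \<subseteq> S \<Longrightarrow> x = (\<lambda>w. \<Sum>u\<in>S. x u * fdel u w)"
proof (rule ext)
  note fdel_app[simp]
  fix w assume S: "finite S" "fsupp x \<subseteq> S"
  show "x w = (\<Sum>u\<in>S. x u * fdel u w)"
  proof (cases "w \<in> S")
    case True then show ?thesis using S by (simp add: if_distrib sum.delta' cong: if_cong)
  next
    case False then have "x w = 0" using S by (auto simp: fsupp_def)
    moreover have "(\<Sum>u\<in>S. x u * fdel u w) = 0" using False by (intro sum.neutral) auto
    ultimately show ?thesis by simp
  qed
qed

declare fdel_app[simp del]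

lemma fext_eq_sum: "finite S \<Longrightarrow> fsupp x \<subseteq> S \<Longrightarrow> fext f x = (\<lambda>w. \<Sum>u\<in>S. x u * wimg f u w)"
  unfolding fext_def
  by (rule ext, rule sum.mono_neutral_left) (auto simp: fsupp_def)

lemma fsupp_sum: "fsupp (\<lambda>w. \<Sum>i\<in>I. b i w) \<subseteq> (\<Union>i\<in>I. fsupp (b i))"
  by (auto simp: fsupp_def dest: sum.not_neutral_contains_not_neutral) 

lemma fmul_sum_left: "fmul (\<lambda>w. \<Sum>i\<in>I. g i w) y w = (\<Sum>i\<in>I. fmul (g i) y w)"
  by (simp add: fmul_def sum_distrib_right sum.swap[of _ I])
lemma fmul_sum_right: "fmul y (\<lambda>w. \<Sum>i\<in>I. g i w) w = (\<Sum>i\<in>I. fmul y (g i) w)"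
  by (simp add: fmul_def sum_distrib_left sum.swap[of _ I])
lemma fmul_cmul_left: "fmul (\<lambda>w. c * g w) y w = c * fmul g y w"
  by (simp add: fmul_def sum_distrib_left algebra_simps)
lemma fmul_cmul_right: "fmul y (\<lambda>w. c * g w) w = c * fmul y g w"
  by (simp add: fmul_def sum_distrib_left algebra_simps)

lemma fext_sum:
  assumes "finite I" "\<And>i. i \<in> I \<Longrightarrow> finite (fsupp (b i))"
  shows "fext f (\<lambda>w. \<Sum>i\<in>I. b i w) = (\<lambda>w. \<Sum>i\<in>I. fext f (b i) w)"
proof -
  define S where "S = (\<Union>i\<in>I. fsupp (b i))"
  have S: "finite S" using assms by (simp add: S_def)
  have "fext f (\<lambda>w. \<Sum>i\<in>I. b i w) = (\<lambda>w. \<Sum>u\<in>S. (\<Sum>i\<in>I. b i u) * wimg f u w)"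
    by (rule fext_eq_sum[OF S]) (use fsupp_sum S_def in blast)
  also have "\<dots> = (\<lambda>w. \<Sum>i\<in>I. \<Sum>u\<in>S. b i u * wimg f u w)"
    by (simp add: sum_distrib_right sum.swap[of _ S])
  also have "\<dots> = (\<lambda>w. \<Sum>i\<in>I. fext f (b i) w)"
  proof -
    have "fext f (b i) = (\<lambda>w. \<Sum>u\<in>S. b i u * wimg f u w)" if "i \<in> I" for i
      by (rule fext_eq_sum[OF S]) (use that S_def in blast)
    then show ?thesis by (auto intro!: ext sum.cong)
  qed
  finally show ?thesis .
qed

lemma fext_smul: "fext f (fsmul c x) = fsmul c (fext f x)"
proof (cases "c = 0")
  case True then show ?thesis by (simp add: fext_def fsmul_def)
next
  case False
  then have "{u. fsmul c x u \<noteq> 0} = {u. x u \<noteq> 0}" by auto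
  then show ?thesis unfolding fext_def by (auto simp: sum_distrib_left algebra_simps fsmul_def)
qed

lemma fext_cmul: "fext f (\<lambda>w. c * x w) = (\<lambda>w. c * fext f x w)"
  using fext_smul[of f c x] by (simp add: fsmul_def)

lemma fext_zero[simp]: "fext f fzero = fzero"
  by (simp add: fext_def fzero_def)

lemma fext_fdel: "fext f (fdel u) = wimg f u"
proof -
  have "{w. fdel u w \<noteq> 0} = {u}" by (auto simp: fdel_app)
  then show ?thesis by (simp add: fext_def fdel_app)
qed

lemma wimg_append: "wimg f (u @ v) = fmul (wimg f u) (wimg f v)"
  by (induction u) (simp_all add: fmul_assoc)

lemma fsupp_fdel: "fsupp (fdel u) = {u}" by (auto simp: fsupp_def fdel_app)

lemma fext_mul:
  assumes x: "finite (fsupp x)" and y: "finite (fsupp y)"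
  shows "fext f (fmul x y) = fmul (fext f x) (fext f y)"
proof -
  define S where "S = fsupp x" define T where "T = fsupp y"
  have xe: "x = (\<lambda>w. \<Sum>u\<in>S. x u * fdel u w)" using fun_as_sum[of S x] x S_def by simp
  have ye: "y = (\<lambda>w. \<Sum>u\<in>T. y u * fdel u w)" using fun_as_sum[of T y] y T_def by simp
  have m: "fmul x y = (\<lambda>w. \<Sum>u\<in>S. \<Sum>v\<in>T. x u * y v * fdel (u @ v) w)"
  proof (rule ext)
    fix w
    have "fmul x y w = fmul (\<lambda>w. \<Sum>u\<in>S. x u * fdel u w) (\<lambda>w. \<Sum>u\<in>T. y u * fdel u w) w"
      using xe ye by simp
    also have "\<dots> = (\<Sum>u\<in>S. \<Sum>v\<in>T. x u * y v * fmul (fdel u) (fdel v) w)"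
      by (simp add: fmul_sum_left fmul_sum_right fmul_cmul_left fmul_cmul_right sum_distrib_left algebra_simps)
    finally show "fmul x y w = (\<Sum>u\<in>S. \<Sum>v\<in>T. x u * y v * fdel (u @ v) w)"
      by (simp add: fmul_fdel)
  qed
  have fS: "finite S" "finite T" using x y S_def T_def by auto
  have "fext f (fmul x y) = (\<lambda>w. \<Sum>u\<in>S. \<Sum>v\<in>T. x u * y v * wimg f (u @ v) w)"
    unfolding m
    apply (subst fext_sum, simp add: fS)
    subgoal for u
      using fsupp_sum[of "\<lambda>v w. x u * y v * fdel (u @ v) w" T] fS
      by (elim finite_subset) (auto simp: fsupp_def fdel_app)
    apply (rule ext, rule sum.cong, simp)
    apply (subst fext_sum, simp add: fS, simp add: fsupp_def fdel_app)
    apply (simp add: fext_cmul[where x="fdel _", simplified] fext_fdel)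
    done
  also have "\<dots> = fmul (\<lambda>w. \<Sum>u\<in>S. x u * wimg f u w) (\<lambda>w. \<Sum>u\<in>T. y u * wimg f u w)"
    by (rule ext) (simp add: wimg_append fmul_sum_left fmul_sum_right fmul_cmul_left fmul_cmul_right sum_distrib_left algebra_simps)
  also have "\<dots> = fmul (fext f x) (fext f y)"
    using fext_eq_sum[of S x f] fext_eq_sum[of T y f] fS S_def T_def by simp
  finally show ?thesis .
qed


lemma fsupp_fadd: "fsupp (fadd x y) \<subseteq> fsupp x \<union> fsupp y" by (auto simp: fsupp_def)
lemma fsupp_fsub: "fsupp (fsub x y) \<subseteq> fsupp x \<union> fsupp y" by (auto simp: fsupp_def)
lemma fsupp_fsmul: "fsupp (fsmul c x) \<subseteq> fsupp x" by (auto simp: fsupp_def)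
lemma fsupp_fgen: "fsupp (fgen g) = {[g]}" by (auto simp: fsupp_def fgen_app)
lemma fsupp_fone: "fsupp fone = {[]}" by (auto simp: fsupp_def fone_app)
lemma fsupp_fzero: "fsupp fzero = {}" by (auto simp: fsupp_def)
lemma fsupp_fmul: "fsupp (fmul x y) \<subseteq> (\<lambda>(u, v). u @ v) ` (fsupp x \<times> fsupp y)"
proof
  fix w assume "w \<in> fsupp (fmul x y)"
  then have "(\<Sum>k\<le>length w. x (take k w) * y (drop k w)) \<noteq> 0" by (simp add: fsupp_def fmul_def)
  then obtain k where "x (take k w) * y (drop k w) \<noteq> 0" by (meson sum.not_neutral_contains_not_neutral)
  then have "(take k w, drop k w) \<in> fsupp x \<times> fsupp y" by (simp add: fsupp_def)
  then show "w \<in> (\<lambda>(u, v). u @ v) ` (fsupp x \<times> fsupp y)" by (metis (no_types, lifting) append_take_drop_id case_prod_conv image_eqI)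
qed
lemma fsupp_fsum: "fsupp (fsum f A) \<subseteq> (\<Union>a\<in>A. fsupp (f a))"
  using fsupp_sum[of f A] by (simp add: fsum_def)
lemma fsupp_fsuml: "fsupp (fsuml f xs) \<subseteq> (\<Union>a\<in>set xs. fsupp (f a))"
proof (induction xs)
  case Nil then show ?case by (simp add: fsupp_def fsuml_def)
next
  case (Cons a xs)
  have "fsuml f (a # xs) = fadd (f a) (fsuml f xs)" by (simp add: fsuml_def fadd_def)
  then have "fsupp (fsuml f (a # xs)) \<subseteq> fsupp (f a) \<union> fsupp (fsuml f xs)" using fsupp_fadd by metis
  then show ?case using Cons.IH by (auto simp del: fsuml_app)
qed

lemma fin_fadd[intro, simp]: "finite (fsupp x) \<Longrightarrow> finite (fsupp y) \<Longrightarrow> finite (fsupp (fadd x y))"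
  by (rule finite_subset[OF fsupp_fadd]) simp
lemma fin_fsub[intro, simp]: "finite (fsupp x) \<Longrightarrow> finite (fsupp y) \<Longrightarrow> finite (fsupp (fsub x y))"
  by (rule finite_subset[OF fsupp_fsub]) simp
lemma fin_fsmul[intro, simp]: "finite (fsupp x) \<Longrightarrow> finite (fsupp (fsmul c x))"
  by (rule finite_subset[OF fsupp_fsmul])
lemma fin_fgen[intro, simp]: "finite (fsupp (fgen g))" by (simp add: fsupp_fgen)
lemma fin_fone[intro, simp]: "finite (fsupp fone)" by (simp add: fsupp_fone)
lemma fin_fzero[intro, simp]: "finite (fsupp fzero)" by (simp add: fsupp_fzero)
lemma fin_fmul[intro, simp]: "finite (fsupp x) \<Longrightarrow> finite (fsupp y) \<Longrightarrow> finite (fsupp (fmul x y))"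
  by (rule finite_subset[OF fsupp_fmul]) simp
lemma fin_fsum[intro, simp]: "finite A \<Longrightarrow> (\<And>a. a \<in> A \<Longrightarrow> finite (fsupp (f a))) \<Longrightarrow> finite (fsupp (fsum f A))"
  by (rule finite_subset[OF fsupp_fsum]) simp
lemma fin_fsuml[intro, simp]: "(\<And>a. a \<in> set xs \<Longrightarrow> finite (fsupp (f a))) \<Longrightarrow> finite (fsupp (fsuml f xs))"
  by (rule finite_subset[OF fsupp_fsuml]) simp

lemma fext_add: "finite (fsupp x) \<Longrightarrow> finite (fsupp y) \<Longrightarrow> fext f (fadd x y) = fadd (fext f x) (fext f y)"
proof -
  assume a: "finite (fsupp x)" "finite (fsupp y)"
  define S where "S = fsupp x \<union> fsupp y"
  have S: "finite S" using a S_def by simp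
  have "fext f (fadd x y) = (\<lambda>w. \<Sum>u\<in>S. fadd x y u * wimg f u w)"
    by (rule fext_eq_sum[OF S]) (use fsupp_fadd[of x y] S_def in blast)
  moreover have "fext f x = (\<lambda>w. \<Sum>u\<in>S. x u * wimg f u w)"
    by (rule fext_eq_sum[OF S]) (use S_def in blast)
  moreover have "fext f y = (\<lambda>w. \<Sum>u\<in>S. y u * wimg f u w)"
    by (rule fext_eq_sum[OF S]) (use S_def in blast)
  ultimately show ?thesis by (simp add: fadd_def sum.distrib algebra_simps)
qed
lemma fext_sub: "finite (fsupp x) \<Longrightarrow> finite (fsupp y) \<Longrightarrow> fext f (fsub x y) = fsub (fext f x) (fext f y)"
proof -
  assume a: "finite (fsupp x)" "finite (fsupp y)"
  have "fsub x y = fadd x (fsmul (-1) y)" by (auto simp: fadd_def fsub_def fsmul_def)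
  then show ?thesis using a by (simp add: fext_add fext_smul) (auto simp: fadd_def fsub_def fsmul_def)
qed
lemma fext_one: "fext f fone = fone"
proof -
  have "{w. fone w \<noteq> 0} = {[]}" by (auto simp: fone_app)
  then show ?thesis unfolding fext_def by simp (simp add: fone_def)
qed
lemma fext_gen: "fext f (fgen g) = f g"
proof -
  have "{w. fgen g w \<noteq> 0} = {[g]}" by (auto simp: fgen_app)
  then show ?thesis by (simp add: fext_def fgen_app)
qed
lemma fext_fsum: "finite A \<Longrightarrow> (\<And>a. a \<in> A \<Longrightarrow> finite (fsupp (f a))) \<Longrightarrow> fext h (fsum f A) = fsum (\<lambda>a. fext h (f a)) A"
  unfolding fsum_def by (simp add: fext_sum)
lemma fext_fsuml: "(\<And>a. a \<in> set xs \<Longrightarrow> finite (fsupp (f a))) \<Longrightarrow> fext h (fsuml f xs) = fsuml (\<lambda>a. fext h (f a)) xs"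
proof (induction xs)
  case Nil then show ?case by (simp add: fsuml_def fzero_def[symmetric])
next
  case (Cons a xs)
  have e: "fsuml f (a # xs) = fadd (f a) (fsuml f xs)" for f :: "'a \<Rightarrow> fa" by (simp add: fsuml_def fadd_def)
  have "fext h (fsuml f (a # xs)) = fext h (fadd (f a) (fsuml f xs))" by (simp only: e)
  also have "\<dots> = fadd (fext h (f a)) (fext h (fsuml f xs))"
    by (rule fext_add) (use Cons.prems in \<open>auto simp del: fsuml_app\<close>)
  also have "\<dots> = fsuml (\<lambda>a. fext h (f a)) (a # xs)"
    using Cons.IH Cons.prems by (simp only: e[of "\<lambda>a. fext h (f a)"]) (simp del: fsuml_app)
  finally show ?case .
qed

lemmas fext_simps = fext_add fext_sub fext_smul fext_mul fext_one fext_gen fext_fsum fext_fsuml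

lemma fpoly_iff: "fpoly N x \<longleftrightarrow> finite (fsupp x) \<and> (\<forall>w\<in>fsupp x. \<forall>g\<in>set w. valid_gen N g)"
  by (auto simp: fpoly_def fsupp_def)
lemma fpoly_fin: "fpoly N x \<Longrightarrow> finite (fsupp x)" by (simp add: fpoly_iff)
lemma fpoly_mono: "finite (fsupp x) \<Longrightarrow> fsupp x \<subseteq> fsupp y \<union> fsupp z \<Longrightarrow> fpoly N y \<Longrightarrow> fpoly N z \<Longrightarrow> fpoly N x"
  by (auto simp: fpoly_iff)
lemma fpoly_fadd[intro]: "fpoly N x \<Longrightarrow> fpoly N y \<Longrightarrow> fpoly N (fadd x y)"
  using fpoly_mono[OF fin_fadd[OF fpoly_fin fpoly_fin] fsupp_fadd] .
lemma fpoly_fsub[intro]: "fpoly N x \<Longrightarrow> fpoly N y \<Longrightarrow> fpoly N (fsub x y)"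
  using fpoly_mono[OF fin_fsub[OF fpoly_fin fpoly_fin] fsupp_fsub] .
lemma fpoly_fsmul[intro]: "fpoly N x \<Longrightarrow> fpoly N (fsmul c x)"
proof -
  assume a: "fpoly N x"
  have "fsupp (fsmul c x) \<subseteq> fsupp x" by (rule fsupp_fsmul)
  then show ?thesis using a unfolding fpoly_iff by (meson fin_fsmul subsetD)
qed
lemma fpoly_fone[intro, simp]: "fpoly N fone" by (simp add: fpoly_iff fsupp_fone)
lemma fpoly_fzero[intro, simp]: "fpoly N fzero" by (simp add: fpoly_iff fsupp_fzero)
lemma fpoly_fgen[intro]: "valid_gen N g \<Longrightarrow> fpoly N (fgen g)" by (simp add: fpoly_iff fsupp_fgen)
lemma fpoly_fmul[intro]: "fpoly N x \<Longrightarrow> fpoly N y \<Longrightarrow> fpoly N (fmul x y)"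
proof -
  assume a: "fpoly N x" "fpoly N y"
  have "\<forall>w\<in>fsupp (fmul x y). \<forall>g\<in>set w. valid_gen N g"
  proof (intro ballI)
    fix w g assume "w \<in> fsupp (fmul x y)" "g \<in> set w"
    then have "w \<in> (\<lambda>(u, v). u @ v) ` (fsupp x \<times> fsupp y)" using fsupp_fmul[of x y] by (meson subsetD)
    then obtain u v where uv: "u \<in> fsupp x" "v \<in> fsupp y" "w = u @ v" by auto
    have "g \<in> set u \<or> g \<in> set v" using uv(3) \<open>g \<in> set w\<close> by simp
    then show "valid_gen N g" using a uv unfolding fpoly_iff by blast
  qed
  then show ?thesis using a by (simp add: fpoly_iff fpoly_fin)
qed


declare fadd_app[simp del] fsub_app[simp del] fsmul_app[simp del] fsum_app[simp del] fsuml_app[simp del] fzero_app[simp del]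
lemmas app_simps = fadd_app fsub_app fsmul_app fsum_app fsuml_app fzero_app fone_app fgen_app

lemma tsideal_fin: "x \<in> tsideal N R \<Longrightarrow> (\<And>r. r \<in> R \<Longrightarrow> finite (fsupp r)) \<Longrightarrow> finite (fsupp x)"
  by (induction rule: tsideal.induct) (auto intro!: fin_fmul dest: fpoly_fin)

lemma tsideal_mul:
  assumes "x \<in> tsideal N R" "fpoly N a" "fpoly N b"
  shows "fmul a (fmul x b) \<in> tsideal N R"
  using assms
proof (induction arbitrary: a b rule: tsideal.induct)
  case zero then show ?case by (simp only: fmul_fzero_left fmul_fzero_right) (rule tsideal.zero)
next
  case (add x y) then show ?case
    by (simp add: fmul_fadd_left fmul_fadd_right tsideal.add)
next
  case (gen r a' b')
  have "fmul a (fmul (fmul a' (fmul r b')) b) = fmul (fmul a a') (fmul r (fmul b' b))"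
    by (simp add: fmul_assoc)
  then show ?case using gen by (auto intro!: tsideal.gen)
qed

lemma tsideal_smul: "x \<in> tsideal N R \<Longrightarrow> fsmul c x \<in> tsideal N R"
  using tsideal_mul[of x N R "fsmul c fone" fone] by (simp add: fmul_fsmul_left fpoly_fsmul[OF fpoly_fone])

lemma tsideal_rel: "r \<in> R \<Longrightarrow> fsmul c r \<in> tsideal N R"
  using tsideal.gen[of r R N "fsmul c fone" fone] by (simp add: fmul_fsmul_left fpoly_fsmul[OF fpoly_fone])

lemma tsideal_rel1: "r \<in> R \<Longrightarrow> r \<in> tsideal N R"
  using tsideal.gen[of r R N fone fone] by simp

lemma fsub_self: "fsub x x = fzero" by (simp add: fsub_def fzero_def)
lemma fsmul_fsmul: "fsmul c (fsmul d x) = fsmul (c * d) x" by (simp add: fsmul_def algebra_simps)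
lemma fsmul_one[simp]: "fsmul 1 x = x" by (simp add: fsmul_def)

lemma tsideal_sub: "x \<in> tsideal N R \<Longrightarrow> y \<in> tsideal N R \<Longrightarrow> fsub x y \<in> tsideal N R"
proof -
  assume "x \<in> tsideal N R" "y \<in> tsideal N R"
  then have "fadd x (fsmul (-1) y) \<in> tsideal N R" by (simp add: tsideal.add tsideal_smul)
  moreover have "fadd x (fsmul (-1) y) = fsub x y" by (simp add: fadd_def fsub_def fsmul_def)
  ultimately show ?thesis by simp
qed

lemma fpoly_sum: "finite I \<Longrightarrow> (\<And>i. i \<in> I \<Longrightarrow> fpoly N (b i)) \<Longrightarrow> fpoly N (\<lambda>w. \<Sum>i\<in>I. b i w)"
proof (induction I rule: finite_induct)
  case empty then show ?case using fpoly_fzero by (simp add: fzero_def)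
next
  case (insert i I)
  have "(\<lambda>w. \<Sum>i\<in>insert i I. b i w) = fadd (b i) (\<lambda>w. \<Sum>i\<in>I. b i w)"
    using insert by (simp add: fadd_def)
  then show ?case using insert by (simp add: fpoly_fadd)
qed

lemma fpoly_wimg: "(\<And>g. valid_gen N g \<Longrightarrow> fpoly N (f g)) \<Longrightarrow> (\<forall>g\<in>set u. valid_gen N g) \<Longrightarrow> fpoly N (wimg f u)"
  by (induction u) (auto intro!: fpoly_fmul)

lemma fpoly_fext:
  assumes f: "\<And>g. valid_gen N g \<Longrightarrow> fpoly N (f g)" and x: "fpoly N x"
  shows "fpoly N (fext f x)"
proof -
  have e: "fext f x = (\<lambda>w. \<Sum>u\<in>fsupp x. fsmul (x u) (wimg f u) w)"
    using fext_eq_sum[of "fsupp x" x f] x by (simp add: fpoly_fin fsmul_app)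
  have "fpoly N (fsmul (x u) (wimg f u))" if "u \<in> fsupp x" for u
    using that x f by (auto simp: fpoly_iff[of N x] intro!: fpoly_fsmul fpoly_wimg)
  then show ?thesis unfolding e
    by (intro fpoly_sum) (use x in \<open>simp_all add: fpoly_fin\<close>)
qed

lemma fin_wimg: "(\<And>g. finite (fsupp (f g))) \<Longrightarrow> finite (fsupp (wimg f u))"
  by (induction u) auto

lemma fext_wimg: "(\<And>g. finite (fsupp (h g))) \<Longrightarrow> fext f (wimg h u) = wimg (\<lambda>g. fext f (h g)) u"
  by (induction u) (simp_all add: fext_one fext_mul fin_wimg)

lemma fext_comp:
  assumes x: "finite (fsupp x)" and h: "\<And>g. finite (fsupp (h g))"
  shows "fext f (fext h x) = fext (\<lambda>g. fext f (h g)) x"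
proof -
  have e: "fext h x = (\<lambda>w. \<Sum>u\<in>fsupp x. (\<lambda>u w. x u * wimg h u w) u w)"
    using fext_eq_sum[of "fsupp x" x h] x by simp
  have "fext f (fext h x) = (\<lambda>w. \<Sum>u\<in>fsupp x. fext f (\<lambda>w. x u * wimg h u w) w)"
    unfolding e by (rule fext_sum) (use x h fin_wimg[of h] in \<open>auto intro: finite_subset[OF fsupp_fsmul, unfolded fsmul_def]\<close>)
  also have "\<dots> = (\<lambda>w. \<Sum>u\<in>fsupp x. x u * wimg (\<lambda>g. fext f (h g)) u w)"
    by (simp add: fext_cmul fext_wimg h)
  also have "\<dots> = fext (\<lambda>g. fext f (h g)) x"
    using fext_eq_sum[of "fsupp x" x] x by simp
  finally show ?thesis .
qed

lemma wimg_fgen: "(\<forall>g\<in>set u. h g = fgen g) \<Longrightarrow> wimg h u = fdel u"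
proof (induction u)
  case Nil then show ?case by (simp add: fdel_def fone_def)
next
  case (Cons g u)
  have "fgen g = fdel [g]" by (simp add: fgen_def fdel_def)
  then show ?case using Cons by (simp add: fmul_fdel)
qed

lemma fext_id:
  assumes x: "finite (fsupp x)" and h: "\<And>g u. u \<in> fsupp x \<Longrightarrow> g \<in> set u \<Longrightarrow> h g = fgen g"
  shows "fext h x = x"
proof -
  have "fext h x = (\<lambda>w. \<Sum>u\<in>fsupp x. x u * wimg h u w)" using fext_eq_sum[of "fsupp x" x] x by simp
  also have "\<dots> = (\<lambda>w. \<Sum>u\<in>fsupp x. x u * fdel u w)"
    by (intro ext sum.cong refl) (simp add: wimg_fgen h)
  also have "\<dots> = x" using fun_as_sum[of "fsupp x" x] x by simp
  finally show ?thesis .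
qed


definition per :: "(int \<Rightarrow> int) \<Rightarrow> nat \<Rightarrow> bool" where
  "per s N \<longleftrightarrow> (\<forall>i. s (i + int N) = s i)"

lemma per_nat: "per s N \<Longrightarrow> s (i + int N * int k) = s i"
proof (induction k arbitrary: i)
  case 0 then show ?case by simp
next
  case (Suc k)
  have "s (i + int N * int (Suc k)) = s ((i + int N * int k) + int N)" by (simp add: algebra_simps)
  also have "\<dots> = s (i + int N * int k)" using Suc.prems by (simp add: per_def)
  finally show ?case using Suc by simp
qed

lemma per_int: "per s N \<Longrightarrow> s (i + int N * k) = s i"
proof (cases "k \<ge> 0")
  case True assume p: "per s N"
  then show ?thesis using per_nat[OF p, of i "nat k"] True by simp
next
  case False assume p: "per s N"
  have "s (i + int N * k) = s ((i + int N * k) + int N * int (nat (- k)))" using per_nat[OF p] by presburger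
  also have "\<dots> = s i" using False by (simp add: algebra_simps)
  finally show ?thesis .
qed

lemma per_dvd: "per s N \<Longrightarrow> int N dvd (i - j) \<Longrightarrow> s i = s j"
proof -
  assume p: "per s N" and "int N dvd (i - j)"
  then obtain k where "i - j = int N * k" by (elim dvdE)
  then have "i = j + int N * k" by simp
  then show ?thesis using per_int[OF p] by simp
qed

lemma per_cong: "per s N \<Longrightarrow> i mod int N = j mod int N \<Longrightarrow> s i = s j"
  by (simp add: mod_eq_dvd_iff per_dvd)

lemma per_mod: "per s N \<Longrightarrow> s (i mod int N) = s i"
  using per_cong[of s N "i mod int N" i] by simp

definition sneg :: "(int \<Rightarrow> int) \<Rightarrow> int \<Rightarrow> int" where "sneg s = (\<lambda>i. - s (1 - i))"

lemma sneg_app: "sneg s i = - s (1 - i)" by (simp add: sneg_def)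
lemma sneg_sneg[simp]: "sneg (sneg s) = s" by (simp add: sneg_def)

lemma per_sneg: "per s N \<Longrightarrow> per (sneg s) N"
  unfolding per_def sneg_def
proof (intro allI)
  fix i assume "\<forall>i. s (i + int N) = s i"
  then have "s ((1 - (i + int N)) + int N) = s (1 - (i + int N))" by blast
  then show "- s (1 - (i + int N)) = - s (1 - i)" by simp
qed

lemma modeq_neg: "((- a) mod (n::int) = (- b) mod n) \<longleftrightarrow> (a mod n = b mod n)"
  by (simp add: mod_eq_dvd_iff) (metis dvd_minus_iff minus_diff_eq diff_minus_eq_add add.commute uminus_add_conv_diff)

lemma sA_cong:
  assumes p: "per s N" and "i mod int N = i' mod int N" "j mod int N = j' mod int N"
  shows "sA s N i j = sA s N i' j'"
proof -
  have b: "(j + 1) mod int N = (j' + 1) mod int N" "(i + 1) mod int N = (i' + 1) mod int N"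
    using mod_add_cong[OF assms(3), of 1 1] mod_add_cong[OF assms(2), of 1 1] by simp_all
  have a: "s i = s i'" "s j = s j'" "s (i + 1) = s (i' + 1)"
    using per_cong[OF p, of i i'] per_cong[OF p, of j j'] per_cong[OF p, of "i+1" "i'+1"] assms(2,3) b by simp_all
  show ?thesis unfolding sA_def using a b assms by simp
qed

lemma sM_cong:
  assumes p: "per s N" and "i mod int N = i' mod int N" "j mod int N = j' mod int N"
  shows "sM s N i j = sM s N i' j'"
proof -
  have b: "(j + 1) mod int N = (j' + 1) mod int N" "(i + 1) mod int N = (i' + 1) mod int N"
    using mod_add_cong[OF assms(3), of 1 1] mod_add_cong[OF assms(2), of 1 1] by simp_all
  have a: "s i = s i'" "s j = s j'"
    using per_cong[OF p, of i i'] per_cong[OF p, of j j'] assms(2,3) by simp_all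
  show ?thesis unfolding sM_def using a b assms by simp
qed

lemma spar_cong:
  assumes p: "per s N" and "i mod int N = i' mod int N"
  shows "spar s i = spar s i'"
proof -
  have b: "(i + 1) mod int N = (i' + 1) mod int N"
    using mod_add_cong[OF assms(2), of 1 1] by simp
  have "s i = s i'" "s (i + 1) = s (i' + 1)"
    using per_cong[OF p, of i i'] per_cong[OF p, of "i+1" "i'+1"] assms(2) b by simp_all
  then show ?thesis by (simp add: spar_def)
qed

lemma spar_sneg: "spar (sneg s) (- i) = spar s i"
  by (simp add: spar_def sneg_def algebra_simps)

lemma dvd_iff_helper: "(n::int) dvd a \<longleftrightarrow> n dvd b" if "a = - b" for a b
  using that by simp

lemma sA_sneg:
  assumes p: "per s N"
  shows "sA (sneg s) N (- i) (- j) = - sA s N i j"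
proof -
  have m1: "((- i) mod int N = (- j) mod int N) = (i mod int N = j mod int N)" by (rule modeq_neg)
  have m2: "((- i) mod int N = (- j + 1) mod int N) = ((i + 1) mod int N = j mod int N)"
    using modeq_neg[of i "int N" "j - 1"] by (simp add: mod_eq_dvd_iff algebra_simps)
  have m3: "((- i + 1) mod int N = (- j) mod int N) = (i mod int N = (j + 1) mod int N)"
    using modeq_neg[of "i - 1" "int N" j] by (simp add: mod_eq_dvd_iff algebra_simps)
  have c2: "(i + 1) mod int N = j mod int N \<Longrightarrow> s (1 + i) = s j"
    using per_cong[OF p, of "1 + i" j] by (simp add: add.commute)
  have c3: "i mod int N = (j + 1) mod int N \<Longrightarrow> s (1 + j) = s i"
    using per_cong[OF p, of "1 + j" i] by (simp add: add.commute)
  show ?thesis unfolding sA_def sneg_def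
    using m1 m2 m3 c2 c3 by (auto simp: algebra_simps)
qed

lemma sA_sym:
  assumes p: "per s N" shows "sA s N i j = sA s N j i"
proof -
  have c1: "i mod int N = j mod int N \<Longrightarrow> s i = s j \<and> s (i+1) = s (j+1)"
  proof -
    assume h: "i mod int N = j mod int N"
    then have "(i + 1) mod int N = (j + 1) mod int N" using mod_add_cong[OF h, of 1 1] by simp
    then show ?thesis using h per_cong[OF p, of i j] per_cong[OF p, of "i+1" "j+1"] by simp
  qed
  show ?thesis unfolding sA_def using c1 by (auto simp: algebra_simps)
qed

lemma sM_sneg:
  assumes p: "per s N" and N: "N \<ge> 3"
  shows "sM (sneg s) N (- i) (- j) = sM s N i j"
proof -
  have m2: "((- i) mod int N = (- j + 1) mod int N) = ((i + 1) mod int N = j mod int N)"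
    using modeq_neg[of i "int N" "j - 1"] by (simp add: mod_eq_dvd_iff algebra_simps)
  have m3: "((- i + 1) mod int N = (- j) mod int N) = (i mod int N = (j + 1) mod int N)"
    using modeq_neg[of "i - 1" "int N" j] by (simp add: mod_eq_dvd_iff algebra_simps)
  have c2: "(i + 1) mod int N = j mod int N \<Longrightarrow> s (1 + i) = s j"
    using per_cong[OF p, of "1 + i" j] by (simp add: add.commute)
  have c3: "i mod int N = (j + 1) mod int N \<Longrightarrow> s (1 + j) = s i"
    using per_cong[OF p, of "1 + j" i] by (simp add: add.commute)
  have ex: "\<not> ((i + 1) mod int N = j mod int N \<and> i mod int N = (j + 1) mod int N)"
  proof
    assume h: "(i + 1) mod int N = j mod int N \<and> i mod int N = (j + 1) mod int N"
    then have "int N dvd (i + 1 - j)" "int N dvd (i - (j + 1))" by (simp_all add: mod_eq_dvd_iff)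
    then have "int N dvd ((i + 1 - j) - (i - (j + 1)))" by (rule dvd_diff)
    then have "int N dvd 2" by simp
    then have "int N \<le> 2" by (rule zdvd_imp_le) simp
    then show False using N by simp
  qed
  show ?thesis unfolding sM_def sneg_def
    using m2 m3 c2 c3 ex by (auto simp: algebra_simps)
qed


fun psi :: "nat \<Rightarrow> gen \<Rightarrow> gen" where
  "psi N (GE i r) = GE ((- i) mod int N) r"
| "psi N (GF i r) = GF ((- i) mod int N) r"
| "psi N (GH i r) = GH ((- i) mod int N) r"
| "psi N (GK i) = GK ((- i) mod int N)"
| "psi N (GKi i) = GKi ((- i) mod int N)"

fun gsg :: "gen \<Rightarrow> complex" where
  "gsg (GF i r) = -1"
| "gsg (GH i r) = -1"
| "gsg _ = 1"

definition phi :: "nat \<Rightarrow> gen \<Rightarrow> fa" where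
  "phi N g = fsmul (gsg g) (fgen (psi N g))"

lemma fin_phi[simp]: "finite (fsupp (phi N g))"
  by (simp add: phi_def)

lemma valid_psi: "N > 0 \<Longrightarrow> valid_gen N g \<Longrightarrow> valid_gen N (psi N g)"
  by (cases g) (auto simp: valid_gen_def)

lemma fpoly_phi: "N > 0 \<Longrightarrow> valid_gen N g \<Longrightarrow> fpoly N (phi N g)"
  unfolding phi_def by (intro fpoly_fsmul fpoly_fgen valid_psi)

lemma gsg_psi: "gsg (psi N g) = gsg g" by (cases g) simp_all
lemma gsg_sq: "gsg g * gsg g = 1" by (cases g) simp_all

lemma psi_psi: "N > 0 \<Longrightarrow> valid_gen N g \<Longrightarrow> psi N (psi N g) = g"
  by (cases g) (auto simp: valid_gen_def mod_minus_eq)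

lemma phi_phi: "N > 0 \<Longrightarrow> valid_gen N g \<Longrightarrow> fext (phi N) (phi N g) = fgen g"
  unfolding phi_def[of N g]
  by (simp add: fext_smul fext_gen phi_def fsmul_fsmul gsg_psi gsg_sq psi_psi)

lemma fext_phi_phi: "N > 0 \<Longrightarrow> fpoly N x \<Longrightarrow> fext (phi N) (fext (phi N) x) = x"
proof -
  assume N: "N > 0" and x: "fpoly N x"
  have "fext (phi N) (fext (phi N) x) = fext (\<lambda>g. fext (phi N) (phi N g)) x"
    by (rule fext_comp) (simp_all add: fpoly_fin[OF x])
  also have "\<dots> = x"
    by (rule fext_id) (use x N in \<open>auto simp: fpoly_fin fpoly_iff phi_phi\<close>)
  finally show ?thesis .
qed

lemma Ec_mod: "Ec N (i mod int N) a = Ec N i a" by (simp add: Ec_def)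
lemma Fc_mod: "Fc N (i mod int N) a = Fc N i a" by (simp add: Fc_def)
lemma Kc_mod: "Kc N (i mod int N) = Kc N i" by (simp add: Kc_def)
lemma Kic_mod: "Kic N (i mod int N) = Kic N i" by (simp add: Kic_def)
lemma Kplus_mod: "Kplus q N (i mod int N) = Kplus q N i" by (simp add: Kplus_def fun_eq_iff)
lemma Kminus_mod: "Kminus q N (i mod int N) = Kminus q N i" by (simp add: Kminus_def fun_eq_iff)

lemma fin_Ec[simp]: "finite (fsupp (Ec N i a))" by (simp add: Ec_def)
lemma fin_Fc[simp]: "finite (fsupp (Fc N i a))" by (simp add: Fc_def)
lemma fin_Kc[simp]: "finite (fsupp (Kc N i))" by (simp add: Kc_def)
lemma fin_Kic[simp]: "finite (fsupp (Kic N i))" by (simp add: Kic_def)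

lemma im_Ec: "fext (phi N) (Ec N i a) = Ec N (- i) a"
  by (simp add: Ec_def fext_gen phi_def mod_minus_eq)
lemma im_Fc: "fext (phi N) (Fc N i a) = fsmul (-1) (Fc N (- i) a)"
  by (simp add: Fc_def fext_gen phi_def mod_minus_eq)
lemma im_Kc: "fext (phi N) (Kc N i) = Kc N (- i)"
  by (simp add: Kc_def fext_gen phi_def mod_minus_eq)
lemma im_Kic: "fext (phi N) (Kic N i) = Kic N (- i)"
  by (simp add: Kic_def fext_gen phi_def mod_minus_eq)

lemma fin_xpow: "(\<And>r. finite (fsupp (a r))) \<Longrightarrow> finite (fsupp (xpow a j n))"
  by (induction j arbitrary: n) auto

lemma fin_expc: "(\<And>r. finite (fsupp (a r))) \<Longrightarrow> finite (fsupp (expc a n))"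
  unfolding expc_def by (auto intro!: fin_fsum fin_fsmul fin_xpow)

lemma fext_xpow: "(\<And>r. finite (fsupp (a r))) \<Longrightarrow> fext f (xpow a j n) = xpow (\<lambda>r. fext f (a r)) j n"
  by (induction j arbitrary: n) (simp_all add: fext_one fext_fsum fext_mul fin_xpow)

lemma fext_expc: "(\<And>r. finite (fsupp (a r))) \<Longrightarrow> fext f (expc a n) = expc (\<lambda>r. fext f (a r)) n"
  unfolding expc_def by (simp add: fext_fsum fext_smul fext_xpow fin_xpow)

lemma fin_Kplus[simp]: "finite (fsupp (Kplus q N i t))"
  unfolding Kplus_def by (auto intro!: fin_expc)
lemma fin_Kminus[simp]: "finite (fsupp (Kminus q N i t))"
  unfolding Kminus_def by (auto intro!: fin_expc)

lemma im_Kplus: "fext (phi N) (Kplus q N i t) = Kplus (inverse q) N (- i) t"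
proof (cases "t < 0")
  case True then show ?thesis by (simp add: Kplus_def)
next
  case False
  have e: "(\<lambda>r. fext (phi N) (fsmul (q - inverse q) (fgen (GH (i mod int N) (int r)))))
        = (\<lambda>r. fsmul (inverse q - inverse (inverse q)) (fgen (GH ((- i) mod int N) (int r))))"
    by (simp add: fext_smul fext_gen phi_def fsmul_fsmul mod_minus_eq algebra_simps)
  show ?thesis using False
    unfolding Kplus_def by (simp add: fext_mul fin_expc fext_expc e fext_gen phi_def mod_minus_eq)
qed

lemma im_Kminus: "fext (phi N) (Kminus q N i t) = Kminus (inverse q) N (- i) t"
proof (cases "0 < t")
  case True then show ?thesis by (simp add: Kminus_def)
next
  case False
  have e: "(\<lambda>r. fext (phi N) (fsmul (inverse q - q) (fgen (GH (i mod int N) (- int r)))))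
        = (\<lambda>r. fsmul (q - inverse q) (fgen (GH ((- i) mod int N) (- int r))))"
    by (simp add: fext_smul fext_gen phi_def fsmul_fsmul mod_minus_eq algebra_simps)
  show ?thesis using False
    unfolding Kminus_def by (simp add: fext_mul fin_expc fext_expc e fext_gen phi_def mod_minus_eq)
qed


lemma qE_cong: "per s N \<Longrightarrow> i mod int N = j mod int N \<Longrightarrow> qE s N i = qE s N j"
  unfolding qE_def using spar_cong[of s N i j] by simp
lemma qF_cong: "per s N \<Longrightarrow> i mod int N = j mod int N \<Longrightarrow> qF s N i = qF s N j"
  unfolding qF_def using spar_cong[of s N i j] by simp
lemma Ec_fun_mod: "Ec N (i mod int N) = Ec N i" by (rule ext) (simp add: Ec_mod)
lemma Fc_fun_mod: "Fc N (i mod int N) = Fc N i" by (rule ext) (simp add: Fc_mod)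
lemma G_mod_add: "per s N \<Longrightarrow> (G = qE s N \<or> G = qF s N) \<Longrightarrow> G (i mod int N + e) = G (i + e)"
  using qE_cong[of s N "i mod int N + e" "i + e"] qF_cong[of s N "i mod int N + e" "i + e"]
  by (auto simp: mod_add_left_eq)
lemma G_mod: "per s N \<Longrightarrow> (G = qE s N \<or> G = qF s N) \<Longrightarrow> G (i mod int N) = G i"
  using G_mod_add[of s N G i 0] by simp
lemma G_mod_sub: "per s N \<Longrightarrow> (G = qE s N \<or> G = qF s N) \<Longrightarrow> G (i mod int N - 1) = G (i - 1)"
  using G_mod_add[of s N G i "-1"] by simp
lemma modIh: "N > 0 \<Longrightarrow> i mod int N \<in> {0..<int N}" by simp

lemma M1: "N > 0 \<Longrightarrow> fsub (fmul (Kc N i) (Kic N i)) fone \<in> rels s N m n d q"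
proof -
  assume N: "N > 0"
  have "fsub (fmul (Kc N (i mod int N)) (Kic N (i mod int N))) fone \<in> rels s N m n d q"
    unfolding rels_def Let_def by (rule UnI1, rule UnI1, rule UnI1, rule UnI1, rule UnI1, rule UnI1, rule UnI1, rule UnI1, rule UnI1, rule UnI1, rule UnI1, rule UnI1, rule UnI1, rule UnI1, rule UnI1, rule UnI1, rule UnI1) (use modIh[OF N] in blast)
  then show ?thesis by (simp add: Kc_mod Kic_mod)
qed

lemma M2: "N > 0 \<Longrightarrow> fsub (fmul (Kic N i) (Kc N i)) fone \<in> rels s N m n d q"
proof -
  assume N: "N > 0"
  have "fsub (fmul (Kic N (i mod int N)) (Kc N (i mod int N))) fone \<in> rels s N m n d q"
    unfolding rels_def Let_def by (rule UnI1, rule UnI1, rule UnI1, rule UnI1, rule UnI1, rule UnI1, rule UnI1, rule UnI1, rule UnI1, rule UnI1, rule UnI1, rule UnI1, rule UnI1, rule UnI1, rule UnI1, rule UnI1, rule UnI2) (use modIh[OF N] in blast)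
  then show ?thesis by (simp add: Kc_mod Kic_mod)
qed

lemma M3: "N > 0 \<Longrightarrow> fsub (fmul (Kc N i) (Kc N j)) (fmul (Kc N j) (Kc N i)) \<in> rels s N m n d q"
proof -
  assume N: "N > 0"
  have "fsub (fmul (Kc N (i mod int N)) (Kc N (j mod int N))) (fmul (Kc N (j mod int N)) (Kc N (i mod int N))) \<in> rels s N m n d q"
    unfolding rels_def Let_def by (rule UnI1, rule UnI1, rule UnI1, rule UnI1, rule UnI1, rule UnI1, rule UnI1, rule UnI1, rule UnI1, rule UnI1, rule UnI1, rule UnI1, rule UnI1, rule UnI1, rule UnI1, rule UnI2) (use modIh[OF N] in blast)
  then show ?thesis by (simp add: Kc_mod)
qed

lemma M4: "N > 0 \<Longrightarrow> per s N \<Longrightarrow> fsub (fmul (Kc N i) (fmul (Ec N j a) (Kic N i))) (fsmul (q powi sA s N i j) (Ec N j a)) \<in> rels s N m n d q"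
proof -
  assume N: "N > 0" and p: "per s N"
  have "fsub (fmul (Kc N (i mod int N)) (fmul (Ec N (j mod int N) a) (Kic N (i mod int N)))) (fsmul (q powi sA s N (i mod int N) (j mod int N)) (Ec N (j mod int N) a)) \<in> rels s N m n d q"
    unfolding rels_def Let_def by (rule UnI1, rule UnI1, rule UnI1, rule UnI1, rule UnI1, rule UnI1, rule UnI1, rule UnI1, rule UnI1, rule UnI1, rule UnI1, rule UnI1, rule UnI1, rule UnI1, rule UnI2) (use modIh[OF N] in blast)
  then show ?thesis using sA_cong[OF p, of "i mod int N" i "j mod int N" j] by (simp add: Kc_mod Kic_mod Ec_mod)
qed

lemma M5: "N > 0 \<Longrightarrow> per s N \<Longrightarrow> fsub (fmul (Kc N i) (fmul (Fc N j a) (Kic N i))) (fsmul (q powi (- sA s N i j)) (Fc N j a)) \<in> rels s N m n d q"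
proof -
  assume N: "N > 0" and p: "per s N"
  have "fsub (fmul (Kc N (i mod int N)) (fmul (Fc N (j mod int N) a) (Kic N (i mod int N)))) (fsmul (q powi (- sA s N (i mod int N) (j mod int N))) (Fc N (j mod int N) a)) \<in> rels s N m n d q"
    unfolding rels_def Let_def by (rule UnI1, rule UnI1, rule UnI1, rule UnI1, rule UnI1, rule UnI1, rule UnI1, rule UnI1, rule UnI1, rule UnI1, rule UnI1, rule UnI1, rule UnI1, rule UnI2) (use modIh[OF N] in blast)
  then show ?thesis using sA_cong[OF p, of "i mod int N" i "j mod int N" j] by (simp add: Kc_mod Kic_mod Fc_mod)
qed

lemma M6: "N > 0 \<Longrightarrow> fsub (fmul (Kplus q N i a) (Kplus q N j b)) (fmul (Kplus q N j b) (Kplus q N i a)) \<in> rels s N m n d q"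
proof -
  assume N: "N > 0"
  have "fsub (fmul (Kplus q N (i mod int N) a) (Kplus q N (j mod int N) b)) (fmul (Kplus q N (j mod int N) b) (Kplus q N (i mod int N) a)) \<in> rels s N m n d q"
    unfolding rels_def Let_def by (rule UnI1, rule UnI1, rule UnI1, rule UnI1, rule UnI1, rule UnI1, rule UnI1, rule UnI1, rule UnI1, rule UnI1, rule UnI1, rule UnI1, rule UnI2) (use modIh[OF N] in blast)
  then show ?thesis by (simp add: Kplus_mod Kminus_mod)
qed

lemma M7: "N > 0 \<Longrightarrow> fsub (fmul (Kminus q N i a) (Kminus q N j b)) (fmul (Kminus q N j b) (Kminus q N i a)) \<in> rels s N m n d q"
proof -
  assume N: "N > 0"
  have "fsub (fmul (Kminus q N (i mod int N) a) (Kminus q N (j mod int N) b)) (fmul (Kminus q N (j mod int N) b) (Kminus q N (i mod int N) a)) \<in> rels s N m n d q"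
    unfolding rels_def Let_def by (rule UnI1, rule UnI1, rule UnI1, rule UnI1, rule UnI1, rule UnI1, rule UnI1, rule UnI1, rule UnI1, rule UnI1, rule UnI1, rule UnI2) (use modIh[OF N] in blast)
  then show ?thesis by (simp add: Kplus_mod Kminus_mod)
qed

lemma M8: "N > 0 \<Longrightarrow> fsub (fmul (Kminus q N i a) (Kplus q N j b)) (fmul (Kplus q N j b) (Kminus q N i a)) \<in> rels s N m n d q"
proof -
  assume N: "N > 0"
  have "fsub (fmul (Kminus q N (i mod int N) a) (Kplus q N (j mod int N) b)) (fmul (Kplus q N (j mod int N) b) (Kminus q N (i mod int N) a)) \<in> rels s N m n d q"
    unfolding rels_def Let_def by (rule UnI1, rule UnI1, rule UnI1, rule UnI1, rule UnI1, rule UnI1, rule UnI1, rule UnI1, rule UnI1, rule UnI1, rule UnI2) (use modIh[OF N] in blast)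
  then show ?thesis by (simp add: Kplus_mod Kminus_mod)
qed

lemma M9: "N > 0 \<Longrightarrow> per s N \<Longrightarrow> KX = Kplus q N \<or> KX = Kminus q N \<Longrightarrow> rel3 (d powi sM s N i j) (q powi (sA s N i j)) (d powi sM s N i j * q powi (sA s N i j)) 1 1 (KX i) (Ec N j) a b \<in> rels s N m n d q"
proof -
  assume N: "N > 0" and p: "per s N" and K: "KX = Kplus q N \<or> KX = Kminus q N"
  have "rel3 (d powi sM s N (i mod int N) (j mod int N)) (q powi (sA s N (i mod int N) (j mod int N))) (d powi sM s N (i mod int N) (j mod int N) * q powi (sA s N (i mod int N) (j mod int N))) 1 1 (KX (i mod int N)) (Ec N (j mod int N)) a b \<in> rels s N m n d q"
    unfolding rels_def Let_def by (rule UnI1, rule UnI1, rule UnI1, rule UnI1, rule UnI1, rule UnI1, rule UnI1, rule UnI1, rule UnI1, rule UnI2) (use modIh[OF N] K in blast)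
  moreover have "KX (i mod int N) = KX i" using K by (auto simp: Kplus_mod Kminus_mod)
  ultimately show ?thesis using sA_cong[OF p, of "i mod int N" i "j mod int N" j] sM_cong[OF p, of "i mod int N" i "j mod int N" j] by (simp add: Ec_fun_mod)
qed

lemma M10: "N > 0 \<Longrightarrow> per s N \<Longrightarrow> KX = Kplus q N \<or> KX = Kminus q N \<Longrightarrow> rel3 (d powi sM s N i j) (q powi (- sA s N i j)) (d powi sM s N i j * q powi (- sA s N i j)) 1 1 (KX i) (Fc N j) a b \<in> rels s N m n d q"
proof -
  assume N: "N > 0" and p: "per s N" and K: "KX = Kplus q N \<or> KX = Kminus q N"
  have "rel3 (d powi sM s N (i mod int N) (j mod int N)) (q powi (- sA s N (i mod int N) (j mod int N))) (d powi sM s N (i mod int N) (j mod int N) * q powi (- sA s N (i mod int N) (j mod int N))) 1 1 (KX (i mod int N)) (Fc N (j mod int N)) a b \<in> rels s N m n d q"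
    unfolding rels_def Let_def by (rule UnI1, rule UnI1, rule UnI1, rule UnI1, rule UnI1, rule UnI1, rule UnI1, rule UnI1, rule UnI2) (use modIh[OF N] K in blast)
  moreover have "KX (i mod int N) = KX i" using K by (auto simp: Kplus_mod Kminus_mod)
  ultimately show ?thesis using sA_cong[OF p, of "i mod int N" i "j mod int N" j] sM_cong[OF p, of "i mod int N" i "j mod int N" j] by (simp add: Fc_fun_mod)
qed

lemma M11: "N > 0 \<Longrightarrow> per s N \<Longrightarrow> fsub (scomm (sgn2 (spar s i) (spar s j)) (Ec N i a) (Fc N j b)) (fsmul ((if i mod int N = j mod int N then 1 else 0) / (q - inverse q)) (fsub (Kplus q N i (a + b)) (Kminus q N i (a + b)))) \<in> rels s N m n d q"
proof -
  assume N: "N > 0" and p: "per s N"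
  have "fsub (scomm (sgn2 (spar s (i mod int N)) (spar s (j mod int N))) (Ec N (i mod int N) a) (Fc N (j mod int N) b)) (fsmul ((if i mod int N = j mod int N then 1 else 0) / (q - inverse q)) (fsub (Kplus q N (i mod int N) (a + b)) (Kminus q N (i mod int N) (a + b)))) \<in> rels s N m n d q"
    unfolding rels_def Let_def by (rule UnI1, rule UnI1, rule UnI1, rule UnI1, rule UnI1, rule UnI1, rule UnI1, rule UnI2) (use modIh[OF N] in blast)
  then show ?thesis using spar_cong[OF p, of "i mod int N" i] spar_cong[OF p, of "j mod int N" j] by (simp add: Ec_mod Fc_mod Kplus_mod Kminus_mod)
qed

lemma M12: "N > 0 \<Longrightarrow> per s N \<Longrightarrow> sA s N i j = 0 \<Longrightarrow> scomm (sgn2 (spar s i) (spar s j)) (Ec N i a) (Ec N j b) \<in> rels s N m n d q"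
proof -
  assume N: "N > 0" and p: "per s N" and A: "sA s N i j = 0"
  have A': "sA s N (i mod int N) (j mod int N) = 0" using A sA_cong[OF p, of "i mod int N" i "j mod int N" j] by simp
  have "scomm (sgn2 (spar s (i mod int N)) (spar s (j mod int N))) (Ec N (i mod int N) a) (Ec N (j mod int N) b) \<in> rels s N m n d q"
    unfolding rels_def Let_def by (rule UnI1, rule UnI1, rule UnI1, rule UnI1, rule UnI1, rule UnI1, rule UnI2) (use modIh[OF N] A' in blast)
  then show ?thesis using spar_cong[OF p, of "i mod int N" i] spar_cong[OF p, of "j mod int N" j] by (simp add: Ec_mod)
qed

lemma M13: "N > 0 \<Longrightarrow> per s N \<Longrightarrow> sA s N i j = 0 \<Longrightarrow> scomm (sgn2 (spar s i) (spar s j)) (Fc N i a) (Fc N j b) \<in> rels s N m n d q"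
proof -
  assume N: "N > 0" and p: "per s N" and A: "sA s N i j = 0"
  have A': "sA s N (i mod int N) (j mod int N) = 0" using A sA_cong[OF p, of "i mod int N" i "j mod int N" j] by simp
  have "scomm (sgn2 (spar s (i mod int N)) (spar s (j mod int N))) (Fc N (i mod int N) a) (Fc N (j mod int N) b) \<in> rels s N m n d q"
    unfolding rels_def Let_def by (rule UnI1, rule UnI1, rule UnI1, rule UnI1, rule UnI1, rule UnI2) (use modIh[OF N] A' in blast)
  then show ?thesis using spar_cong[OF p, of "i mod int N" i] spar_cong[OF p, of "j mod int N" j] by (simp add: Fc_mod)
qed

lemma M14: "N > 0 \<Longrightarrow> per s N \<Longrightarrow> sA s N i j \<noteq> 0 \<Longrightarrow> rel3 (d powi sM s N i j) (q powi (sA s N i j)) (d powi sM s N i j * q powi (sA s N i j)) 1 (sgn2 (spar s i) (spar s j)) (Ec N i) (Ec N j) a b \<in> rels s N m n d q"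
proof -
  assume N: "N > 0" and p: "per s N" and A: "sA s N i j \<noteq> 0"
  have A': "sA s N (i mod int N) (j mod int N) \<noteq> 0" using A sA_cong[OF p, of "i mod int N" i "j mod int N" j] by simp
  have "rel3 (d powi sM s N (i mod int N) (j mod int N)) (q powi (sA s N (i mod int N) (j mod int N))) (d powi sM s N (i mod int N) (j mod int N) * q powi (sA s N (i mod int N) (j mod int N))) 1 (sgn2 (spar s (i mod int N)) (spar s (j mod int N))) (Ec N (i mod int N)) (Ec N (j mod int N)) a b \<in> rels s N m n d q"
    unfolding rels_def Let_def by (rule UnI1, rule UnI1, rule UnI1, rule UnI1, rule UnI2) (use modIh[OF N] A' in blast)
  then show ?thesis using sA_cong[OF p, of "i mod int N" i "j mod int N" j] sM_cong[OF p, of "i mod int N" i "j mod int N" j] spar_cong[OF p, of "i mod int N" i] spar_cong[OF p, of "j mod int N" j] by (simp add: Ec_fun_mod)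
qed

lemma M15: "N > 0 \<Longrightarrow> per s N \<Longrightarrow> sA s N i j \<noteq> 0 \<Longrightarrow> rel3 (d powi sM s N i j) (q powi (- sA s N i j)) (d powi sM s N i j * q powi (- sA s N i j)) 1 (sgn2 (spar s i) (spar s j)) (Fc N i) (Fc N j) a b \<in> rels s N m n d q"
proof -
  assume N: "N > 0" and p: "per s N" and A: "sA s N i j \<noteq> 0"
  have A': "sA s N (i mod int N) (j mod int N) \<noteq> 0" using A sA_cong[OF p, of "i mod int N" i "j mod int N" j] by simp
  have "rel3 (d powi sM s N (i mod int N) (j mod int N)) (q powi (- sA s N (i mod int N) (j mod int N))) (d powi sM s N (i mod int N) (j mod int N) * q powi (- sA s N (i mod int N) (j mod int N))) 1 (sgn2 (spar s (i mod int N)) (spar s (j mod int N))) (Fc N (i mod int N)) (Fc N (j mod int N)) a b \<in> rels s N m n d q"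
    unfolding rels_def Let_def by (rule UnI1, rule UnI1, rule UnI1, rule UnI2) (use modIh[OF N] A' in blast)
  then show ?thesis using sA_cong[OF p, of "i mod int N" i "j mod int N" j] sM_cong[OF p, of "i mod int N" i "j mod int N" j] spar_cong[OF p, of "i mod int N" i] spar_cong[OF p, of "j mod int N" j] by (simp add: Fc_fun_mod)
qed

lemma M16: "N > 0 \<Longrightarrow> per s N \<Longrightarrow> sA s N i i \<noteq> 0 \<Longrightarrow> e = 1 \<or> e = -1 \<Longrightarrow> G = qE s N \<or> G = qF s N \<Longrightarrow>
   fadd (fst (qbr s N q (G i a) (qbr s N q (G i b) (G (i + e) c)))) (fst (qbr s N q (G i b) (qbr s N q (G i a) (G (i + e) c)))) \<in> rels s N m n d q"
proof -
  assume N: "N > 0" and p: "per s N" and A: "sA s N i i \<noteq> 0" and e: "e = 1 \<or> e = -1" and G: "G = qE s N \<or> G = qF s N"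
  have A': "sA s N (i mod int N) (i mod int N) \<noteq> 0" using A sA_cong[OF p, of "i mod int N" i "i mod int N" i] by simp
  have "fadd (fst (qbr s N q (G (i mod int N) a) (qbr s N q (G (i mod int N) b) (G (i mod int N + e) c)))) (fst (qbr s N q (G (i mod int N) b) (qbr s N q (G (i mod int N) a) (G (i mod int N + e) c)))) \<in> rels s N m n d q"
    unfolding rels_def Let_def by (rule UnI1, rule UnI1, rule UnI2) (use modIh[OF N] A' e G in blast)
  then show ?thesis by (simp add: G_mod[OF p G] G_mod_add[OF p G])
qed

lemma M17: "N > 0 \<Longrightarrow> per s N \<Longrightarrow> m * n \<noteq> 2 \<Longrightarrow> sA s N i i = 0 \<Longrightarrow> G = qE s N \<or> G = qF s N \<Longrightarrow>
   fadd (fst (qbr s N q (G i a) (qbr s N q (G (i + 1) c1) (qbr s N q (G i b) (G (i - 1) c2))))) (fst (qbr s N q (G i b) (qbr s N q (G (i + 1) c1) (qbr s N q (G i a) (G (i - 1) c2))))) \<in> rels s N m n d q"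
proof -
  assume N: "N > 0" and p: "per s N" and mn: "m * n \<noteq> 2" and A: "sA s N i i = 0" and G: "G = qE s N \<or> G = qF s N"
  have A': "sA s N (i mod int N) (i mod int N) = 0" using A sA_cong[OF p, of "i mod int N" i "i mod int N" i] by simp
  have "fadd (fst (qbr s N q (G (i mod int N) a) (qbr s N q (G (i mod int N + 1) c1) (qbr s N q (G (i mod int N) b) (G (i mod int N - 1) c2))))) (fst (qbr s N q (G (i mod int N) b) (qbr s N q (G (i mod int N + 1) c1) (qbr s N q (G (i mod int N) a) (G (i mod int N - 1) c2))))) \<in> rels s N m n d q"
    unfolding rels_def Let_def by (rule UnI1, rule UnI2) (use modIh[OF N] A' mn G in blast)
  then show ?thesis by (simp add: G_mod[OF p G] G_mod_add[OF p G] G_mod_sub[OF p G])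
qed

lemma M18: "N > 0 \<Longrightarrow> per s N \<Longrightarrow> m * n = 2 \<Longrightarrow> sA s N i i \<noteq> 0 \<Longrightarrow> G = qE s N \<or> G = qF s N \<Longrightarrow>
   fsub
        (fsuml (\<lambda>(x1, x2, y1, y2). fst (qbr s N q (G (i - 1) x1) (qbr s N q (G (i + 1) y1)
              (qbr s N q (G (i - 1) x2) (qbr s N q (G (i + 1) y2) (G (i) c))))))
           [(a1, a2, b1, b2), (a2, a1, b1, b2), (a1, a2, b2, b1), (a2, a1, b2, b1)])
        (fsuml (\<lambda>(x1, x2, y1, y2). fst (qbr s N q (G (i + 1) y1) (qbr s N q (G (i - 1) x1)
              (qbr s N q (G (i + 1) y2) (qbr s N q (G (i - 1) x2) (G (i) c))))))
           [(a1, a2, b1, b2), (a2, a1, b1, b2), (a1, a2, b2, b1), (a2, a1, b2, b1)]) \<in> rels s N m n d q"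
proof -
  assume N: "N > 0" and p: "per s N" and mn: "m * n = 2" and A: "sA s N i i \<noteq> 0" and G: "G = qE s N \<or> G = qF s N"
  have A': "sA s N (i mod int N) (i mod int N) \<noteq> 0" using A sA_cong[OF p, of "i mod int N" i "i mod int N" i] by simp
  have "fsub
        (fsuml (\<lambda>(x1, x2, y1, y2). fst (qbr s N q (G (i mod int N - 1) x1) (qbr s N q (G (i mod int N + 1) y1)
              (qbr s N q (G (i mod int N - 1) x2) (qbr s N q (G (i mod int N + 1) y2) (G (i mod int N) c))))))
           [(a1, a2, b1, b2), (a2, a1, b1, b2), (a1, a2, b2, b1), (a2, a1, b2, b1)])
        (fsuml (\<lambda>(x1, x2, y1, y2). fst (qbr s N q (G (i mod int N + 1) y1) (qbr s N q (G (i mod int N - 1) x1)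
              (qbr s N q (G (i mod int N + 1) y2) (qbr s N q (G (i mod int N - 1) x2) (G (i mod int N) c))))))
           [(a1, a2, b1, b2), (a2, a1, b1, b2), (a1, a2, b2, b1), (a2, a1, b2, b1)]) \<in> rels s N m n d q"
    unfolding rels_def Let_def by (rule UnI2) (use modIh[OF N] A' mn G in blast)
  then show ?thesis by (simp add: G_mod[OF p G] G_mod_add[OF p G] G_mod_sub[OF p G])
qed


lemma fin_rel3: "(\<And>a. finite (fsupp (X a))) \<Longrightarrow> (\<And>b. finite (fsupp (Y b))) \<Longrightarrow> finite (fsupp (rel3 c1 c2 c3 c4 sg X Y a b))"
  unfolding rel3_def by simp
lemma fin_scomm: "finite (fsupp x) \<Longrightarrow> finite (fsupp y) \<Longrightarrow> finite (fsupp (scomm sg x y))"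
  unfolding scomm_def by simp
lemma fin_qbr: "finite (fsupp (fst X)) \<Longrightarrow> finite (fsupp (fst Y)) \<Longrightarrow> finite (fsupp (fst (qbr s N q X Y)))"
  unfolding qbr_def by (cases X, cases Y) simp
lemma fin_qE: "finite (fsupp (fst (qE s N i a)))" by (simp add: qE_def)
lemma fin_qF: "finite (fsupp (fst (qF s N i a)))" by (simp add: qF_def)
lemma fin_G: "G = qE s N \<or> G = qF s N \<Longrightarrow> finite (fsupp (fst (G i a)))"
  using fin_qE fin_qF by auto

lemma fin_Kp_fun: "KX = Kplus q N \<or> KX = Kminus q N \<Longrightarrow> finite (fsupp (KX i a))"
  by auto

lemma fin_fsuml4: "finite (fsupp (f x1)) \<Longrightarrow> finite (fsupp (f x2)) \<Longrightarrow> finite (fsupp (f x3)) \<Longrightarrow> finite (fsupp (f x4)) \<Longrightarrow> finite (fsupp (fsuml f [x1, x2, x3, x4]))"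
  by (rule fin_fsuml) auto

lemma rels_fin: "r \<in> rels s N m n d q \<Longrightarrow> finite (fsupp r)"
  unfolding rels_def Let_def
  apply (elim UnE CollectE exE conjE disjE)
  apply (simp_all add: fin_rel3 fin_scomm fin_qbr fin_qE fin_qF fin_fsuml4 del: fin_fsuml)
  done

definition wrel :: "nat \<Rightarrow> (int \<Rightarrow> int) \<Rightarrow> (int \<Rightarrow> int) \<Rightarrow> bool" where
  "wrel N w w' \<longleftrightarrow> (\<forall>k\<in>{0..<int N}. w' k = w ((- k) mod int N))"

lemma sum_rho: "N > 0 \<Longrightarrow> (\<Sum>j\<in>{0..<int N}. g j) = (\<Sum>j\<in>{0..<int N}. g ((- j) mod int N))"
  by (rule sum.reindex_bij_witness[where i = "\<lambda>j. (- j) mod int N" and j = "\<lambda>j. (- j) mod int N"])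
     (auto simp: mod_minus_eq)

lemma bform_sneg:
  assumes p: "per s N" and N: "N > 0" and x: "wrel N wx wx'" and y: "wrel N wy wy'"
  shows "bform (sneg s) N wx' wy' = - bform s N wx wy"
proof -
  have "bform (sneg s) N wx' wy' = (\<Sum>j\<in>{0..<int N}. \<Sum>k\<in>{0..<int N}. wx ((- j) mod int N) * wy ((- k) mod int N) * sA (sneg s) N j k)"
    unfolding bform_def using x y by (simp add: wrel_def)
  also have "\<dots> = (\<Sum>j\<in>{0..<int N}. \<Sum>k\<in>{0..<int N}. wx j * wy k * sA (sneg s) N ((- j) mod int N) ((- k) mod int N))"
  proof -
    have rr: "(- ((- k) mod int N)) mod int N = k" if "k \<in> {0..<int N}" for k
      using that by (simp add: mod_minus_eq)
    have "(\<Sum>k\<in>{0..<int N}. wx ((- j) mod int N) * wy ((- k) mod int N) * sA (sneg s) N j k)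
        = (\<Sum>k\<in>{0..<int N}. wx ((- j) mod int N) * wy k * sA (sneg s) N j ((- k) mod int N))" for j
      by (rule sum.reindex_bij_witness[where i = "\<lambda>j. (- j) mod int N" and j = "\<lambda>j. (- j) mod int N"])
         (auto simp: rr)
    then have "(\<Sum>j\<in>{0..<int N}. \<Sum>k\<in>{0..<int N}. wx ((- j) mod int N) * wy ((- k) mod int N) * sA (sneg s) N j k)
      = (\<Sum>j\<in>{0..<int N}. \<Sum>k\<in>{0..<int N}. wx ((- j) mod int N) * wy k * sA (sneg s) N j ((- k) mod int N))"
      by simp
    also have "\<dots> = (\<Sum>j\<in>{0..<int N}. \<Sum>k\<in>{0..<int N}. wx j * wy k * sA (sneg s) N ((- j) mod int N) ((- k) mod int N))"
      by (rule sum.reindex_bij_witness[where i = "\<lambda>j. (- j) mod int N" and j = "\<lambda>j. (- j) mod int N"])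
         (auto simp: rr)
    finally show ?thesis .
  qed
  also have "\<dots> = (\<Sum>j\<in>{0..<int N}. \<Sum>k\<in>{0..<int N}. wx j * wy k * (- sA s N j k))"
  proof -
    have "sA (sneg s) N ((- j) mod int N) ((- k) mod int N) = - sA s N j k" for j k
      using sA_cong[OF per_sneg[OF p], of "(- j) mod int N" "- j" "(- k) mod int N" "- k"] sA_sneg[OF p, of j k]
      by simp
    then show ?thesis by simp
  qed
  also have "\<dots> = - bform s N wx wy"
    unfolding bform_def by (simp add: sum_negf)
  finally show ?thesis .
qed

lemma wrel_add: "wrel N a a' \<Longrightarrow> wrel N b b' \<Longrightarrow> wrel N (\<lambda>k. a k + b k) (\<lambda>k. a' k + b' k)"
  by (simp add: wrel_def)
lemma wrel_neg: "wrel N a a' \<Longrightarrow> wrel N (\<lambda>k. - a k) (\<lambda>k. - a' k)"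
  by (simp add: wrel_def)
lemma wrel_unit: "N > 0 \<Longrightarrow> wrel N (unitw (i mod int N)) (unitw ((- i) mod int N))"
proof -
  assume N: "N > 0"
  have "(k = (- i) mod int N) = ((- k) mod int N = i mod int N)" if "k \<in> {0..<int N}" for k
  proof -
    have "k = k mod int N" using that by simp
    then have "(k = (- i) mod int N) = (k mod int N = (- i) mod int N)" by simp
    also have "\<dots> = ((- k) mod int N = i mod int N)" using modeq_neg[of k "int N" "- i"] by simp
    finally show ?thesis .
  qed
  then show ?thesis by (simp add: wrel_def unitw_def)
qed

lemma inv_powi: "inverse q powi k = q powi (- k)" for q :: complex
  by (simp add: power_int_inverse power_int_minus)

definition hsim :: "nat \<Rightarrow> complex \<Rightarrow> hel \<Rightarrow> hel \<Rightarrow> bool" where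
  "hsim N \<sigma> X X' \<longleftrightarrow> fext (phi N) (fst X) = fsmul \<sigma> (fst X') \<and> finite (fsupp (fst X)) \<and>
      fst (snd X) = fst (snd X') \<and> wrel N (snd (snd X)) (snd (snd X'))"

lemma hsim_qbr:
  assumes p: "per s N" and N: "N > 0" and X: "hsim N \<sigma> X X'" and Y: "hsim N \<tau> Y Y'"
  shows "hsim N (\<sigma> * \<tau>) (qbr s N q X Y) (qbr (sneg s) N (inverse q) X' Y')"
proof -
  obtain x px wx where Xe: "X = (x, px, wx)" by (cases X) auto
  obtain x' px' wx' where Xe': "X' = (x', px', wx')" by (cases X') auto
  obtain y py wy where Ye: "Y = (y, py, wy)" by (cases Y) auto
  obtain y' py' wy' where Ye': "Y' = (y', py', wy')" by (cases Y') auto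
  have h: "fext (phi N) x = fsmul \<sigma> x'" "finite (fsupp x)" "px = px'" "wrel N wx wx'"
          "fext (phi N) y = fsmul \<tau> y'" "finite (fsupp y)" "py = py'" "wrel N wy wy'"
    using X Y Xe Xe' Ye Ye' by (simp_all add: hsim_def)
  have b: "bform (sneg s) N wx' wy' = - bform s N wx wy" by (rule bform_sneg[OF p N h(4) h(8)])
  have "fext (phi N) (fst (qbr s N q X Y)) = fsmul (\<sigma> * \<tau>) (fst (qbr (sneg s) N (inverse q) X' Y'))"
    unfolding Xe Xe' Ye Ye' qbr_def
    by (rule ext) (simp add: fext_sub fext_mul fext_smul h b inv_powi fmul_fsmul_left fmul_fsmul_right app_simps algebra_simps)
  moreover have "finite (fsupp (fst (qbr s N q X Y)))"
    unfolding Xe Ye qbr_def using h by simp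
  ultimately show ?thesis
    unfolding hsim_def using h Xe Xe' Ye Ye' by (simp add: qbr_def wrel_add)
qed

lemma hsim_qE: "N > 0 \<Longrightarrow> hsim N 1 (qE s N i a) (qE (sneg s) N (- i) a)"
  unfolding hsim_def qE_def by (simp add: im_Ec[unfolded Ec_def] spar_sneg wrel_unit)

lemma hsim_qF: "N > 0 \<Longrightarrow> hsim N (-1) (qF s N i a) (qF (sneg s) N (- i) a)"
  unfolding hsim_def qF_def by (simp add: im_Fc[unfolded Fc_def] spar_sneg wrel_unit wrel_neg)

lemma hsim_G:
  assumes "G = qE s N \<or> G = qF s N" "N > 0"
  obtains \<sigma> G' where "G' = qE (sneg s) N \<or> G' = qF (sneg s) N" "\<And>i a. hsim N \<sigma> (G i a) (G' (- i) a)" "\<sigma> * \<sigma> = 1"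
  using assms hsim_qE hsim_qF by (metis mult_1 mult_minus1_right minus_minus)

lemma hsim_fst: "hsim N \<sigma> X X' \<Longrightarrow> fext (phi N) (fst X) = fsmul \<sigma> (fst X')"
  by (simp add: hsim_def)


abbreviation "Tp s N m n d q \<equiv> tsideal N (rels (sneg s) N n m d (inverse q))"

lemmas push = fext_sub fext_mul fext_one fext_smul fext_add im_Kc im_Kic im_Ec im_Fc im_Kplus im_Kminus
lemmas scal = inv_powi

lemma I1: "N > 0 \<Longrightarrow> fext (phi N) (fsub (fmul (Kc N i) (Kic N i)) fone) \<in> Tp s N m n d q"
  using tsideal_rel1[OF M1[of N "- i"]] by (simp add: push)
lemma I2: "N > 0 \<Longrightarrow> fext (phi N) (fsub (fmul (Kic N i) (Kc N i)) fone) \<in> Tp s N m n d q"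
  using tsideal_rel1[OF M2[of N "- i"]] by (simp add: push)
lemma I3: "N > 0 \<Longrightarrow> fext (phi N) (fsub (fmul (Kc N i) (Kc N j)) (fmul (Kc N j) (Kc N i))) \<in> Tp s N m n d q"
  using tsideal_rel1[OF M3[of N "- i" "- j"]] by (simp add: push)

lemma I4: "N > 0 \<Longrightarrow> per s N \<Longrightarrow> fext (phi N) (fsub (fmul (Kc N i) (fmul (Ec N j a) (Kic N i))) (fsmul (q powi sA s N i j) (Ec N j a))) \<in> Tp s N m n d q"
  using tsideal_rel1[OF M4[OF _ per_sneg, of N s "- i" "- j" a "inverse q"]] by (simp add: push sA_sneg inv_powi)

lemma I5: "N > 0 \<Longrightarrow> per s N \<Longrightarrow> fext (phi N) (fsub (fmul (Kc N i) (fmul (Fc N j a) (Kic N i))) (fsmul (q powi (- sA s N i j)) (Fc N j a))) \<in> Tp s N m n d q"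
proof -
  assume N: "N > 0" and p: "per s N"
  have "fext (phi N) (fsub (fmul (Kc N i) (fmul (Fc N j a) (Kic N i))) (fsmul (q powi (- sA s N i j)) (Fc N j a)))
    = fsmul (-1) (fsub (fmul (Kc N (- i)) (fmul (Fc N (- j) a) (Kic N (- i)))) (fsmul (inverse q powi (- sA (sneg s) N (- i) (- j))) (Fc N (- j) a)))"
    by (rule ext) (simp add: push sA_sneg[OF p] inv_powi fmul_fsmul_left fmul_fsmul_right app_simps algebra_simps)
  then show ?thesis using tsideal_rel[OF M5[OF N per_sneg[OF p]]] by simp
qed

lemma I6: "N > 0 \<Longrightarrow> fext (phi N) (fsub (fmul (Kplus q N i a) (Kplus q N j b)) (fmul (Kplus q N j b) (Kplus q N i a))) \<in> Tp s N m n d q"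
  using tsideal_rel1[OF M6[of N "inverse q" "- i" a "- j" b]] by (simp add: push)
lemma I7: "N > 0 \<Longrightarrow> fext (phi N) (fsub (fmul (Kminus q N i a) (Kminus q N j b)) (fmul (Kminus q N j b) (Kminus q N i a))) \<in> Tp s N m n d q"
  using tsideal_rel1[OF M7[of N "inverse q" "- i" a "- j" b]] by (simp add: push)
lemma I8: "N > 0 \<Longrightarrow> fext (phi N) (fsub (fmul (Kminus q N i a) (Kplus q N j b)) (fmul (Kplus q N j b) (Kminus q N i a))) \<in> Tp s N m n d q"
  using tsideal_rel1[OF M8[of N "inverse q" "- i" a "- j" b]] by (simp add: push)

lemma I9:
  assumes N: "N \<ge> 3" and p: "per s N" and K: "KX = Kplus q N \<or> KX = Kminus q N"
  shows "fext (phi N) (rel3 (d powi sM s N i j) (q powi sA s N i j) (d powi sM s N i j * q powi sA s N i j) 1 1 (KX i) (Ec N j) a b) \<in> Tp s N m n d q"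
proof -
  have N0: "N > 0" using N by simp
  obtain KX' where K': "KX' = Kplus (inverse q) N \<or> KX' = Kminus (inverse q) N" and e: "\<And>i a. fext (phi N) (KX i a) = KX' (- i) a"
    using K im_Kplus im_Kminus by metis
  have fK: "\<And>i a. finite (fsupp (KX i a))" using K by auto
  have "fext (phi N) (rel3 (d powi sM s N i j) (q powi sA s N i j) (d powi sM s N i j * q powi sA s N i j) 1 1 (KX i) (Ec N j) a b)
     = rel3 (d powi sM (sneg s) N (- i) (- j)) (inverse q powi sA (sneg s) N (- i) (- j)) (d powi sM (sneg s) N (- i) (- j) * inverse q powi sA (sneg s) N (- i) (- j)) 1 1 (KX' (- i)) (Ec N (- j)) a b"
    unfolding rel3_def by (simp add: push fK e sA_sneg[OF p] sM_sneg[OF p N] inv_powi)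
  then show ?thesis using tsideal_rel1[OF M9[OF N0 per_sneg[OF p] K']] by simp
qed

lemma I10:
  assumes N: "N \<ge> 3" and p: "per s N" and K: "KX = Kplus q N \<or> KX = Kminus q N"
  shows "fext (phi N) (rel3 (d powi sM s N i j) (q powi (- sA s N i j)) (d powi sM s N i j * q powi (- sA s N i j)) 1 1 (KX i) (Fc N j) a b) \<in> Tp s N m n d q"
proof -
  have N0: "N > 0" using N by simp
  obtain KX' where K': "KX' = Kplus (inverse q) N \<or> KX' = Kminus (inverse q) N" and e: "\<And>i a. fext (phi N) (KX i a) = KX' (- i) a"
    using K im_Kplus im_Kminus by metis
  have fK: "\<And>i a. finite (fsupp (KX i a))" using K by auto
  have "fext (phi N) (rel3 (d powi sM s N i j) (q powi (- sA s N i j)) (d powi sM s N i j * q powi (- sA s N i j)) 1 1 (KX i) (Fc N j) a b)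
     = fsmul (-1) (rel3 (d powi sM (sneg s) N (- i) (- j)) (inverse q powi (- sA (sneg s) N (- i) (- j))) (d powi sM (sneg s) N (- i) (- j) * inverse q powi (- sA (sneg s) N (- i) (- j))) 1 1 (KX' (- i)) (Fc N (- j)) a b)"
    unfolding rel3_def
    by (rule ext) (simp add: push fK e sA_sneg[OF p] sM_sneg[OF p N] inv_powi fmul_fsmul_left fmul_fsmul_right app_simps algebra_simps)
  then show ?thesis using tsideal_rel[OF M10[OF N0 per_sneg[OF p] K']] by simp
qed

lemma I11:
  assumes N: "N > 0" and p: "per s N" and ij: "i \<in> {0..<int N}" "j \<in> {0..<int N}"
  shows "fext (phi N) (fsub (scomm (sgn2 (spar s i) (spar s j)) (Ec N i a) (Fc N j b))
          (fsmul ((if i = j then 1 else 0) / (q - inverse q)) (fsub (Kplus q N i (a + b)) (Kminus q N i (a + b))))) \<in> Tp s N m n d q"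
proof -
  have dl: "((- i) mod int N = (- j) mod int N) = (i = j)"
    using ij by (simp add: modeq_neg)
  have eq: "fext (phi N) (fsub (scomm (sgn2 (spar s i) (spar s j)) (Ec N i a) (Fc N j b))
          (fsmul ((if i = j then 1 else 0) / (q - inverse q)) (fsub (Kplus q N i (a + b)) (Kminus q N i (a + b)))))
    = fsmul (-1) (fsub (scomm (sgn2 (spar (sneg s) (- i)) (spar (sneg s) (- j))) (Ec N (- i) a) (Fc N (- j) b))
          (fsmul ((if (- i) mod int N = (- j) mod int N then 1 else 0) / (inverse q - inverse (inverse q))) (fsub (Kplus (inverse q) N (- i) (a + b)) (Kminus (inverse q) N (- i) (a + b)))))"
    unfolding scomm_def dl
    by (rule ext) (simp add: push spar_sneg fmul_fsmul_left fmul_fsmul_right app_simps algebra_simps divide_simps)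
  show ?thesis unfolding eq by (rule tsideal_rel[OF M11[OF N per_sneg[OF p]]])
qed

lemma I12: "N > 0 \<Longrightarrow> per s N \<Longrightarrow> sA s N i j = 0 \<Longrightarrow> fext (phi N) (scomm (sgn2 (spar s i) (spar s j)) (Ec N i a) (Ec N j b)) \<in> Tp s N m n d q"
  using tsideal_rel1[OF M12[OF _ per_sneg, of N s "- i" "- j" a b]] by (simp add: push scomm_def sA_sneg spar_sneg)

lemma I13:
  assumes N: "N > 0" and p: "per s N" and A: "sA s N i j = 0"
  shows "fext (phi N) (scomm (sgn2 (spar s i) (spar s j)) (Fc N i a) (Fc N j b)) \<in> Tp s N m n d q"
proof -
  have "fext (phi N) (scomm (sgn2 (spar s i) (spar s j)) (Fc N i a) (Fc N j b)) = scomm (sgn2 (spar (sneg s) (- i)) (spar (sneg s) (- j))) (Fc N (- i) a) (Fc N (- j) b)"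
    unfolding scomm_def by (rule ext) (simp add: push spar_sneg fmul_fsmul_left fmul_fsmul_right app_simps algebra_simps)
  moreover have "sA (sneg s) N (- i) (- j) = 0" using A sA_sneg[OF p] by simp
  ultimately show ?thesis using tsideal_rel1[OF M13[OF N per_sneg[OF p]]] by simp
qed

lemma I14:
  assumes N: "N \<ge> 3" and p: "per s N" and A: "sA s N i j \<noteq> 0"
  shows "fext (phi N) (rel3 (d powi sM s N i j) (q powi sA s N i j) (d powi sM s N i j * q powi sA s N i j) 1 (sgn2 (spar s i) (spar s j)) (Ec N i) (Ec N j) a b) \<in> Tp s N m n d q"
proof -
  have N0: "N > 0" using N by simp
  have "fext (phi N) (rel3 (d powi sM s N i j) (q powi sA s N i j) (d powi sM s N i j * q powi sA s N i j) 1 (sgn2 (spar s i) (spar s j)) (Ec N i) (Ec N j) a b)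
     = rel3 (d powi sM (sneg s) N (- i) (- j)) (inverse q powi sA (sneg s) N (- i) (- j)) (d powi sM (sneg s) N (- i) (- j) * inverse q powi sA (sneg s) N (- i) (- j)) 1 (sgn2 (spar (sneg s) (- i)) (spar (sneg s) (- j))) (Ec N (- i)) (Ec N (- j)) a b"
    unfolding rel3_def by (simp add: push sA_sneg[OF p] sM_sneg[OF p N] inv_powi spar_sneg)
  moreover have "sA (sneg s) N (- i) (- j) \<noteq> 0" using A sA_sneg[OF p] by simp
  ultimately show ?thesis using tsideal_rel1[OF M14[OF N0 per_sneg[OF p]]] by simp
qed

lemma I15:
  assumes N: "N \<ge> 3" and p: "per s N" and A: "sA s N i j \<noteq> 0"
  shows "fext (phi N) (rel3 (d powi sM s N i j) (q powi (- sA s N i j)) (d powi sM s N i j * q powi (- sA s N i j)) 1 (sgn2 (spar s i) (spar s j)) (Fc N i) (Fc N j) a b) \<in> Tp s N m n d q"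
proof -
  have N0: "N > 0" using N by simp
  have "fext (phi N) (rel3 (d powi sM s N i j) (q powi (- sA s N i j)) (d powi sM s N i j * q powi (- sA s N i j)) 1 (sgn2 (spar s i) (spar s j)) (Fc N i) (Fc N j) a b)
     = rel3 (d powi sM (sneg s) N (- i) (- j)) (inverse q powi (- sA (sneg s) N (- i) (- j))) (d powi sM (sneg s) N (- i) (- j) * inverse q powi (- sA (sneg s) N (- i) (- j))) 1 (sgn2 (spar (sneg s) (- i)) (spar (sneg s) (- j))) (Fc N (- i)) (Fc N (- j)) a b"
    unfolding rel3_def
    by (rule ext) (simp add: push sA_sneg[OF p] sM_sneg[OF p N] inv_powi spar_sneg fmul_fsmul_left fmul_fsmul_right app_simps algebra_simps)
  moreover have "sA (sneg s) N (- i) (- j) \<noteq> 0" using A sA_sneg[OF p] by simp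
  ultimately show ?thesis using tsideal_rel1[OF M15[OF N0 per_sneg[OF p]]] by simp
qed


lemma I16:
  assumes N: "N > 0" and p: "per s N" and A: "sA s N i i \<noteq> 0" and e: "e = 1 \<or> e = -1"
    and G: "G = qE s N \<or> G = qF s N"
  shows "fext (phi N) (fadd (fst (qbr s N q (G i a) (qbr s N q (G i b) (G (i + e) c)))) (fst (qbr s N q (G i b) (qbr s N q (G i a) (G (i + e) c))))) \<in> Tp s N m n d q"
proof -
  obtain \<sigma> G' where G': "G' = qE (sneg s) N \<or> G' = qF (sneg s) N" and h: "\<And>i a. hsim N \<sigma> (G i a) (G' (- i) a)"
    using hsim_G[OF G N] by metis
  have h2: "hsim N \<sigma> (G (i + e) c) (G' (- i + - e) c)" using h[of "i + e" c] by simp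
  note hq = hsim_qbr[OF p N]
  have "fext (phi N) (fadd (fst (qbr s N q (G i a) (qbr s N q (G i b) (G (i + e) c)))) (fst (qbr s N q (G i b) (qbr s N q (G i a) (G (i + e) c)))))
    = fsmul (\<sigma> * (\<sigma> * \<sigma>)) (fadd (fst (qbr (sneg s) N (inverse q) (G' (- i) a) (qbr (sneg s) N (inverse q) (G' (- i) b) (G' (- i + - e) c))))
          (fst (qbr (sneg s) N (inverse q) (G' (- i) b) (qbr (sneg s) N (inverse q) (G' (- i) a) (G' (- i + - e) c)))))"
  proof -
    have t1: "hsim N (\<sigma> * (\<sigma> * \<sigma>)) (qbr s N q (G i a) (qbr s N q (G i b) (G (i + e) c))) (qbr (sneg s) N (inverse q) (G' (- i) a) (qbr (sneg s) N (inverse q) (G' (- i) b) (G' (- i + - e) c)))"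
      by (rule hq[OF h hq[OF h h2]])
    have t2: "hsim N (\<sigma> * (\<sigma> * \<sigma>)) (qbr s N q (G i b) (qbr s N q (G i a) (G (i + e) c))) (qbr (sneg s) N (inverse q) (G' (- i) b) (qbr (sneg s) N (inverse q) (G' (- i) a) (G' (- i + - e) c)))"
      by (rule hq[OF h hq[OF h h2]])
    have "fext (phi N) (fadd (fst (qbr s N q (G i a) (qbr s N q (G i b) (G (i + e) c)))) (fst (qbr s N q (G i b) (qbr s N q (G i a) (G (i + e) c)))))
      = fadd (fext (phi N) (fst (qbr s N q (G i a) (qbr s N q (G i b) (G (i + e) c))))) (fext (phi N) (fst (qbr s N q (G i b) (qbr s N q (G i a) (G (i + e) c)))))"
      using t1 t2 by (simp add: hsim_def fext_add)
    then show ?thesis using t1 t2 by (simp only: hsim_fst) (rule ext, simp add: app_simps algebra_simps)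
  qed
  moreover have A': "sA (sneg s) N (- i) (- i) \<noteq> 0" using A sA_sneg[OF p] by simp
  moreover have e': "- e = 1 \<or> - e = -1" using e by auto
  ultimately show ?thesis by (simp only:) (rule tsideal_rel[OF M16[OF N per_sneg[OF p] A' e' G']])
qed

lemma fext_fsuml4: "finite (fsupp (f x1)) \<Longrightarrow> finite (fsupp (f x2)) \<Longrightarrow> finite (fsupp (f x3)) \<Longrightarrow> finite (fsupp (f x4)) \<Longrightarrow>
  fext h (fsuml f [x1, x2, x3, x4]) = fsuml (\<lambda>a. fext h (f a)) [x1, x2, x3, x4]"
  by (rule fext_fsuml) auto

lemma I18:
  assumes N: "N > 0" and p: "per s N" and mn: "m * n = 2" and A: "sA s N i i \<noteq> 0"
    and G: "G = qE s N \<or> G = qF s N"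
  shows "fext (phi N) (fsub
        (fsuml (\<lambda>(x1, x2, y1, y2). fst (qbr s N q (G (i - 1) x1) (qbr s N q (G (i + 1) y1)
              (qbr s N q (G (i - 1) x2) (qbr s N q (G (i + 1) y2) (G i c))))))
           [(a1, a2, b1, b2), (a2, a1, b1, b2), (a1, a2, b2, b1), (a2, a1, b2, b1)])
        (fsuml (\<lambda>(x1, x2, y1, y2). fst (qbr s N q (G (i + 1) y1) (qbr s N q (G (i - 1) x1)
              (qbr s N q (G (i + 1) y2) (qbr s N q (G (i - 1) x2) (G i c))))))
           [(a1, a2, b1, b2), (a2, a1, b1, b2), (a1, a2, b2, b1), (a2, a1, b2, b1)])) \<in> Tp s N m n d q"
proof -
  obtain \<sigma> G' where G': "G' = qE (sneg s) N \<or> G' = qF (sneg s) N" and h: "\<And>i a. hsim N \<sigma> (G i a) (G' (- i) a)"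
    using hsim_G[OF G N] by metis
  define i' where "i' = - i"
  have hm: "hsim N \<sigma> (G (i - 1) x) (G' (i' + 1) x)" for x using h[of "i - 1" x] by (simp add: i'_def)
  have hp: "hsim N \<sigma> (G (i + 1) x) (G' (i' - 1) x)" for x using h[of "i + 1" x] by (simp add: i'_def)
  have h0: "hsim N \<sigma> (G i x) (G' i' x)" for x using h[of i x] by (simp add: i'_def)
  note hq = hsim_qbr[OF p N]
  let ?q = "qbr (sneg s) N (inverse q)"
  have f1: "fext (phi N) (fst (qbr s N q (G (i - 1) x1) (qbr s N q (G (i + 1) y1)
              (qbr s N q (G (i - 1) x2) (qbr s N q (G (i + 1) y2) (G i c))))))
     = fsmul (\<sigma> * (\<sigma> * (\<sigma> * (\<sigma> * \<sigma>)))) (fst (?q (G' (i' + 1) x1) (?q (G' (i' - 1) y1)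
              (?q (G' (i' + 1) x2) (?q (G' (i' - 1) y2) (G' i' c))))))" for x1 x2 y1 y2
    using hq[OF hm hq[OF hp hq[OF hm hq[OF hp h0]]]] by (simp add: hsim_def)
  have f2: "fext (phi N) (fst (qbr s N q (G (i + 1) y1) (qbr s N q (G (i - 1) x1)
              (qbr s N q (G (i + 1) y2) (qbr s N q (G (i - 1) x2) (G i c))))))
     = fsmul (\<sigma> * (\<sigma> * (\<sigma> * (\<sigma> * \<sigma>)))) (fst (?q (G' (i' - 1) y1) (?q (G' (i' + 1) x1)
              (?q (G' (i' - 1) y2) (?q (G' (i' + 1) x2) (G' i' c))))))" for x1 x2 y1 y2
    using hq[OF hp hq[OF hm hq[OF hp hq[OF hm h0]]]] by (simp add: hsim_def)
  have fin1: "finite (fsupp (fst (qbr s N q (G (i - 1) x1) (qbr s N q (G (i + 1) y1)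
              (qbr s N q (G (i - 1) x2) (qbr s N q (G (i + 1) y2) (G i c)))))))" for x1 x2 y1 y2
    using hq[OF hm hq[OF hp hq[OF hm hq[OF hp h0]]]] by (simp add: hsim_def)
  have fin2: "finite (fsupp (fst (qbr s N q (G (i + 1) y1) (qbr s N q (G (i - 1) x1)
              (qbr s N q (G (i + 1) y2) (qbr s N q (G (i - 1) x2) (G i c)))))))" for x1 x2 y1 y2
    using hq[OF hp hq[OF hm hq[OF hp hq[OF hm h0]]]] by (simp add: hsim_def)
  have eq: "fext (phi N) (fsub
        (fsuml (\<lambda>(x1, x2, y1, y2). fst (qbr s N q (G (i - 1) x1) (qbr s N q (G (i + 1) y1)
              (qbr s N q (G (i - 1) x2) (qbr s N q (G (i + 1) y2) (G i c))))))
           [(a1, a2, b1, b2), (a2, a1, b1, b2), (a1, a2, b2, b1), (a2, a1, b2, b1)])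
        (fsuml (\<lambda>(x1, x2, y1, y2). fst (qbr s N q (G (i + 1) y1) (qbr s N q (G (i - 1) x1)
              (qbr s N q (G (i + 1) y2) (qbr s N q (G (i - 1) x2) (G i c))))))
           [(a1, a2, b1, b2), (a2, a1, b1, b2), (a1, a2, b2, b1), (a2, a1, b2, b1)]))
    = fsmul (- (\<sigma> * (\<sigma> * (\<sigma> * (\<sigma> * \<sigma>))))) (fsub
        (fsuml (\<lambda>(x1, x2, y1, y2). fst (?q (G' (i' - 1) x1) (?q (G' (i' + 1) y1)
              (?q (G' (i' - 1) x2) (?q (G' (i' + 1) y2) (G' i' c))))))
           [(b1, b2, a1, a2), (b2, b1, a1, a2), (b1, b2, a2, a1), (b2, b1, a2, a1)])
        (fsuml (\<lambda>(x1, x2, y1, y2). fst (?q (G' (i' + 1) y1) (?q (G' (i' - 1) x1)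
              (?q (G' (i' + 1) y2) (?q (G' (i' - 1) x2) (G' i' c))))))
           [(b1, b2, a1, a2), (b2, b1, a1, a2), (b1, b2, a2, a1), (b2, b1, a2, a1)]))"
    apply (simp add: fext_sub fext_fsuml4 fin_fsuml4 fin1 fin2 del: fin_fsuml)
    apply (rule ext)
    apply (simp add: app_simps f1 f2)
    apply (simp add: algebra_simps)
    done
  have A': "sA (sneg s) N i' i' \<noteq> 0" using A sA_sneg[OF p] by (simp add: i'_def)
  have mn': "n * m = 2" using mn by (simp add: mult.commute)
  show ?thesis unfolding eq by (rule tsideal_rel[OF M18[OF N per_sneg[OF p] mn' A' G']])
qed


fun wd :: "(nat \<Rightarrow> fa) \<Rightarrow> nat list \<Rightarrow> fa" where
  "wd v [] = fone"
| "wd v (k # u) = fmul (v k) (wd v u)"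

definition ev :: "(nat \<Rightarrow> fa) \<Rightarrow> (complex \<times> nat list) list \<Rightarrow> fa" where
  "ev v L = (\<lambda>w. \<Sum>p\<leftarrow>L. fst p * wd v (snd p) w)"

lemma wd_append: "wd v (u @ t) = fmul (wd v u) (wd v t)"
  by (induction u) (simp_all add: fmul_assoc)

lemma ev_Nil: "ev v [] = fzero" by (simp add: ev_def fzero_def)
lemma ev_Cons: "ev v (p # L) = (\<lambda>w. fst p * wd v (snd p) w + ev v L w)" by (simp add: ev_def)

lemma ev_append: "fadd (ev v L1) (ev v L2) = ev v (L1 @ L2)"
  by (simp add: ev_def fadd_def)

lemma ev_smul: "fsmul c (ev v L) = ev v (map (\<lambda>p. (c * fst p, snd p)) L)"
  unfolding ev_def fsmul_def by (rule ext, induction L) (simp_all add: algebra_simps)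

lemma ev_sub: "fsub (ev v L1) (ev v L2) = ev v (L1 @ map (\<lambda>p. (- fst p, snd p)) L2)"
proof -
  have "fsub (ev v L1) (ev v L2) = fadd (ev v L1) (fsmul (-1) (ev v L2))"
    by (simp add: fsub_def fadd_def fsmul_def)
  then show ?thesis by (simp add: ev_smul ev_append)
qed

lemma fmul_ev_left: "fmul (ev v L) y w = (\<Sum>p\<leftarrow>L. fst p * fmul (wd v (snd p)) y w)"
proof (induction L)
  case Nil then show ?case by (simp add: ev_Nil fmul_def fzero_def)
next
  case (Cons p L)
  have "fmul (ev v (p # L)) y w = fst p * fmul (wd v (snd p)) y w + fmul (ev v L) y w"
    unfolding ev_Cons by (rule fmul_lin_left)
  then show ?case using Cons by simp
qed

lemma fmul_ev_right: "fmul y (ev v L) w = (\<Sum>p\<leftarrow>L. fst p * fmul y (wd v (snd p)) w)"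
proof (induction L)
  case Nil then show ?case by (simp add: ev_Nil fmul_def fzero_def)
next
  case (Cons p L)
  have "fmul y (ev v (p # L)) w = fst p * fmul y (wd v (snd p)) w + fmul y (ev v L) w"
    unfolding ev_Cons by (rule fmul_lin_right)
  then show ?case using Cons by simp
qed

lemma ev_mul: "fmul (ev v L1) (ev v L2) = ev v (concat (map (\<lambda>p. map (\<lambda>r. (fst p * fst r, snd p @ snd r)) L2) L1))"
proof (rule ext)
  fix w
  have "fmul (ev v L1) (ev v L2) w = (\<Sum>p\<leftarrow>L1. fst p * fmul (wd v (snd p)) (ev v L2) w)"
    by (rule fmul_ev_left)
  also have "\<dots> = (\<Sum>p\<leftarrow>L1. fst p * (\<Sum>r\<leftarrow>L2. fst r * fmul (wd v (snd p)) (wd v (snd r)) w))"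
    by (simp only: fmul_ev_right)
  also have "\<dots> = ev v (concat (map (\<lambda>p. map (\<lambda>r. (fst p * fst r, snd p @ snd r)) L2) L1)) w"
    by (induction L1) (simp_all add: ev_def wd_append sum_list_const_mult algebra_simps comp_def)
  finally show "fmul (ev v L1) (ev v L2) w = ev v (concat (map (\<lambda>p. map (\<lambda>r. (fst p * fst r, snd p @ snd r)) L2) L1)) w" .
qed

lemma ev_var: "v k = ev v [(1, [k])]" by (simp add: ev_def)
lemma ev_one: "fone = ev v [(1, [])]" by (simp add: ev_def)

definition coef :: "(complex \<times> nat list) list \<Rightarrow> nat list \<Rightarrow> complex" where
  "coef L u = (\<Sum>p\<leftarrow>L. if snd p = u then fst p else 0)"

lemma coef_Nil[simp]: "coef [] u = 0" by (simp add: coef_def)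
lemma coef_Cons[simp]: "coef (p # L) u = (if snd p = u then fst p else 0) + coef L u" by (simp add: coef_def)

lemma ev_coef: "finite W \<Longrightarrow> set (map snd L) \<subseteq> W \<Longrightarrow> ev v L = (\<lambda>w. \<Sum>u\<in>W. coef L u * wd v u w)"
proof (induction L)
  case Nil then show ?case by (simp add: ev_def)
next
  case (Cons p L)
  have "snd p \<in> W" using Cons.prems by simp
  then have "(\<Sum>u\<in>W. (if snd p = u then fst p else 0) * wd v u w) = fst p * wd v (snd p) w" for w
  proof -
    have "(\<Sum>u\<in>W. (if snd p = u then fst p else 0) * wd v u w) = (\<Sum>u\<in>W. if u = snd p then fst p * wd v (snd p) w else 0)"
      by (rule sum.cong) auto
    then show ?thesis using Cons.prems(1) \<open>snd p \<in> W\<close> by (simp add: sum.delta')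
  qed
  then show ?case using Cons by (auto simp: ev_Cons algebra_simps sum.distrib fun_eq_iff)
qed

lemma ev_eq:
  assumes "\<forall>u\<in>set (map snd L1 @ map snd L2). coef L1 u = coef L2 u"
  shows "ev v L1 = ev v L2"
proof -
  let ?W = "set (map snd L1 @ map snd L2)"
  have "ev v L1 = (\<lambda>w. \<Sum>u\<in>?W. coef L1 u * wd v u w)" by (rule ev_coef) auto
  also have "\<dots> = (\<lambda>w. \<Sum>u\<in>?W. coef L2 u * wd v u w)" using assms by simp
  also have "\<dots> = ev v L2" by (rule ev_coef[symmetric]) auto
  finally show ?thesis .
qed

lemma mirror_core:
  fixes ea eb X Y :: fa and k1 k2 k3 k1' k2' k3' \<epsilon> \<kappa> :: complex
  assumes H1: "\<kappa> * k1' * k2' = 1" and H2: "k1 * k2 = \<kappa>"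
    and H3: "\<kappa> * (- k1' + k3 * k2' * \<epsilon>) = - k1 * \<epsilon> + k3 * k2" and H4: "k3' = k3"
  defines "r \<equiv> fsub (fmul ea eb) (fsmul (-1) (fmul eb ea))"
    and "t \<equiv> fsub (fmul X Y) (fsmul \<epsilon> (fmul Y X))"
    and "T \<equiv> \<lambda>ea eb. fsub (fmul ea (fsub (fmul X (fsub (fmul eb Y) (fsmul k1 (fmul Y eb)))) (fsmul k2 (fmul (fsub (fmul eb Y) (fsmul k1 (fmul Y eb))) X))))
                 (fsmul k3 (fmul (fsub (fmul X (fsub (fmul eb Y) (fsmul k1 (fmul Y eb)))) (fsmul k2 (fmul (fsub (fmul eb Y) (fsmul k1 (fmul Y eb))) X))) ea))"
    and "T' \<equiv> \<lambda>ea eb. fsub (fmul ea (fsub (fmul Y (fsub (fmul eb X) (fsmul k1' (fmul X eb)))) (fsmul k2' (fmul (fsub (fmul eb X) (fsmul k1' (fmul X eb))) Y))))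
                 (fsmul k3' (fmul (fsub (fmul Y (fsub (fmul eb X) (fsmul k1' (fmul X eb)))) (fsmul k2' (fmul (fsub (fmul eb X) (fsmul k1' (fmul X eb))) Y))) ea))"
  shows "fadd (T ea eb) (T eb ea) =
     fadd (fsmul \<kappa> (fadd (T' ea eb) (T' eb ea)))
      (fadd (fmul (fsmul (- k2) fone) (fmul r (fmul Y X)))
      (fadd (fmul (fsmul (k3 * k1) (fmul X Y)) (fmul r fone))
      (fadd (fmul (fsmul (- k1) ea) (fmul t eb))
      (fadd (fmul (fsmul (- k1) eb) (fmul t ea))
      (fadd (fmul (fsmul (\<kappa> * k2') fone) (fmul r (fmul X Y)))
      (fadd (fmul (fsmul (- (\<kappa> * k3 * k1')) (fmul Y X)) (fmul r fone))
      (fadd (fmul (fsmul (- (\<kappa> * k3 * k2')) eb) (fmul t ea))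
            (fmul (fsmul (- (\<kappa> * k3 * k2')) ea) (fmul t eb)))))))))"
proof -
  define v where "v = (\<lambda>k::nat. if k = 0 then ea else if k = 1 then eb else if k = 2 then X else Y)"
  have e: "ea = ev v [(1, [0])]" "eb = ev v [(1, [1])]" "X = ev v [(1, [2])]" "Y = ev v [(1, [3])]" "fone = ev v [(1, [])]"
    by (simp_all add: ev_def v_def)
  show ?thesis
    unfolding T_def T'_def r_def t_def
    apply (simp only: e)
    apply (simp only: ev_mul ev_sub ev_smul ev_append)
    apply (rule ev_eq)
    apply (simp add: H4)
    using H1 H2 H3 by algebra
qed

lemma mirror_mem:
  fixes ea eb X Y :: fa and k1 k2 k3 k1' k2' k3' \<epsilon> :: complex
  assumes R1: "fadd (fsub (fmul ea (fsub (fmul Y (fsub (fmul eb X) (fsmul k1' (fmul X eb)))) (fsmul k2' (fmul (fsub (fmul eb X) (fsmul k1' (fmul X eb))) Y))))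
                 (fsmul k3' (fmul (fsub (fmul Y (fsub (fmul eb X) (fsmul k1' (fmul X eb)))) (fsmul k2' (fmul (fsub (fmul eb X) (fsmul k1' (fmul X eb))) Y))) ea)))
              (fsub (fmul eb (fsub (fmul Y (fsub (fmul ea X) (fsmul k1' (fmul X ea)))) (fsmul k2' (fmul (fsub (fmul ea X) (fsmul k1' (fmul X ea))) Y))))
                 (fsmul k3' (fmul (fsub (fmul Y (fsub (fmul ea X) (fsmul k1' (fmul X ea)))) (fsmul k2' (fmul (fsub (fmul ea X) (fsmul k1' (fmul X ea))) Y))) eb)))
          \<in> tsideal N R"
    and rr: "fsub (fmul ea eb) (fsmul (-1) (fmul eb ea)) \<in> R"
    and tt: "fsub (fmul X Y) (fsmul \<epsilon> (fmul Y X)) \<in> R"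
    and pa: "fpoly N ea" and pb: "fpoly N eb" and pX: "fpoly N X" and pY: "fpoly N Y"
    and H1: "k1 * k2 * k1' * k2' = 1"
    and H3: "(k1 * k2) * (- k1' + k3 * k2' * \<epsilon>) = - k1 * \<epsilon> + k3 * k2" and H4: "k3' = k3"
  shows "fadd (fsub (fmul ea (fsub (fmul X (fsub (fmul eb Y) (fsmul k1 (fmul Y eb)))) (fsmul k2 (fmul (fsub (fmul eb Y) (fsmul k1 (fmul Y eb))) X))))
                 (fsmul k3 (fmul (fsub (fmul X (fsub (fmul eb Y) (fsmul k1 (fmul Y eb)))) (fsmul k2 (fmul (fsub (fmul eb Y) (fsmul k1 (fmul Y eb))) X))) ea)))
              (fsub (fmul eb (fsub (fmul X (fsub (fmul ea Y) (fsmul k1 (fmul Y ea)))) (fsmul k2 (fmul (fsub (fmul ea Y) (fsmul k1 (fmul Y ea))) X))))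
                 (fsmul k3 (fmul (fsub (fmul X (fsub (fmul ea Y) (fsmul k1 (fmul Y ea)))) (fsmul k2 (fmul (fsub (fmul ea Y) (fsmul k1 (fmul Y ea))) X))) eb)))
          \<in> tsideal N R"
proof -
  have rr': "fsub (fmul eb ea) (fsmul (-1) (fmul ea eb)) \<in> tsideal N R"
  proof -
    have "fsub (fmul eb ea) (fsmul (-1) (fmul ea eb)) = fsub (fmul ea eb) (fsmul (-1) (fmul eb ea))"
      by (rule ext) (simp add: app_simps)
    then show ?thesis using tsideal_rel1[OF rr] by simp
  qed
  have H1': "k1 * k2 * k1' * k2' = 1" by (rule H1)
  note eq = mirror_core[where \<kappa> = "k1 * k2", OF H1' refl H3 H4]
  note g = tsideal.gen[OF _ fpoly_fsmul fpoly_fmul]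
  show ?thesis
    apply (subst eq)
    apply (intro tsideal.add)
    apply (rule tsideal_smul[OF R1])
    apply (rule tsideal.gen[OF rr], simp add: fpoly_fsmul, simp add: fpoly_fmul pX pY)
    apply (rule tsideal.gen[OF rr], simp add: fpoly_fsmul fpoly_fmul pX pY, simp)
    apply (rule tsideal.gen[OF tt], simp add: fpoly_fsmul pa pb, simp add: pa pb)
    apply (rule tsideal.gen[OF tt], simp add: fpoly_fsmul pa pb, simp add: pa pb)
    apply (rule tsideal.gen[OF rr], simp add: fpoly_fsmul, simp add: fpoly_fmul pX pY)
    apply (rule tsideal.gen[OF rr], simp add: fpoly_fsmul fpoly_fmul pX pY, simp)
    apply (rule tsideal.gen[OF tt], simp add: fpoly_fsmul pa pb, simp add: pa pb)
    apply (rule tsideal.gen[OF tt], simp add: fpoly_fsmul pa pb, simp add: pa pb)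
    done
qed


lemma bform_add_r: "bform s N x (\<lambda>k. y k + z k) = bform s N x y + bform s N x z"
  by (simp add: bform_def algebra_simps sum.distrib)
lemma bform_add_l: "bform s N (\<lambda>k. y k + z k) x = bform s N y x + bform s N z x"
  by (simp add: bform_def algebra_simps sum.distrib)
lemma bform_neg_l: "bform s N (\<lambda>k. - y k) x = - bform s N y x"
  by (simp add: bform_def sum_negf)
lemma bform_neg_r: "bform s N x (\<lambda>k. - y k) = - bform s N x y"
  by (simp add: bform_def sum_negf)

lemma bform_unit:
  assumes p: "per s N" and N: "N > 0"
  shows "bform s N (unitw (j mod int N)) (unitw (k mod int N)) = sA s N j k"
proof -
  have "bform s N (unitw (j mod int N)) (unitw (k mod int N)) = sA s N (j mod int N) (k mod int N)"
  proof -
    let ?j = "j mod int N" and ?k = "k mod int N"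
    have jk: "?j \<in> {0..<int N}" "?k \<in> {0..<int N}" using N by simp_all
    have "(\<Sum>ka\<in>{0..<int N}. unitw ?j ja * unitw ?k ka * sA s N ja ka) = unitw ?j ja * sA s N ja ?k" for ja
    proof -
      have "(\<Sum>ka\<in>{0..<int N}. unitw ?j ja * unitw ?k ka * sA s N ja ka) = (\<Sum>ka\<in>{0..<int N}. if ka = ?k then unitw ?j ja * sA s N ja ?k else 0)"
        by (rule sum.cong) (auto simp: unitw_def)
      then show ?thesis using jk by (simp add: sum.delta')
    qed
    then have "bform s N (unitw ?j) (unitw ?k) = (\<Sum>ja\<in>{0..<int N}. unitw ?j ja * sA s N ja ?k)"
      by (simp add: bform_def)
    also have "\<dots> = (\<Sum>ja\<in>{0..<int N}. if ja = ?j then sA s N ?j ?k else 0)"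
      by (rule sum.cong) (auto simp: unitw_def)
    also have "\<dots> = sA s N ?j ?k" using jk by (simp add: sum.delta')
    finally show ?thesis .
  qed
  then show ?thesis using sA_cong[OF p, of "j mod int N" j "k mod int N" k] by simp
qed

lemma G_struct:
  assumes p: "per s N" and N: "N > 0" and G: "G = qE s N \<or> G = qF s N"
  obtains Lf wG where "\<And>j x. G j x = (Lf j x, spar s j, wG j)"
    "\<And>j k. bform s N (wG j) (wG k) = sA s N j k"
    "\<And>j x. fpoly N (Lf j x)"
    "\<And>j k x y. sA s N j k = 0 \<Longrightarrow> scomm (sgn2 (spar s j) (spar s k)) (Lf j x) (Lf k y) \<in> rels s N m n d q"
proof (cases "G = qE s N")
  case True
  show ?thesis
  proof (rule that[of "Ec N" "\<lambda>j. unitw (j mod int N)"])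
    show "G j x = (Ec N j x, spar s j, unitw (j mod int N))" for j x using True by (simp add: qE_def Ec_def)
    show "bform s N (unitw (j mod int N)) (unitw (k mod int N)) = sA s N j k" for j k by (rule bform_unit[OF p N])
    show "fpoly N (Ec N j x)" for j x unfolding Ec_def by (rule fpoly_fgen) (simp add: valid_gen_def N)
    show "sA s N j k = 0 \<Longrightarrow> scomm (sgn2 (spar s j) (spar s k)) (Ec N j x) (Ec N k y) \<in> rels s N m n d q" for j k x y
      by (rule M12[OF N p])
  qed
next
  case False
  then have GF: "G = qF s N" using G by simp
  show ?thesis
  proof (rule that[of "Fc N" "\<lambda>j k. - unitw (j mod int N) k"])
    show "G j x = (Fc N j x, spar s j, \<lambda>k. - unitw (j mod int N) k)" for j x using GF by (simp add: qF_def Fc_def)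
    show "bform s N (\<lambda>ka. - unitw (j mod int N) ka) (\<lambda>ka. - unitw (k mod int N) ka) = sA s N j k" for j k
      by (simp add: bform_neg_l bform_neg_r bform_unit[OF p N])
    show "fpoly N (Fc N j x)" for j x unfolding Fc_def by (rule fpoly_fgen) (simp add: valid_gen_def N)
    show "sA s N j k = 0 \<Longrightarrow> scomm (sgn2 (spar s j) (spar s k)) (Fc N j x) (Fc N k y) \<in> rels s N m n d q" for j k x y
      by (rule M13[OF N p])
  qed
qed

lemma modne: "0 < d \<Longrightarrow> d < int N \<Longrightarrow> a - b = d \<or> b - a = d \<Longrightarrow> a mod int N \<noteq> b mod int N"
proof
  assume d: "0 < d" "d < int N" "a - b = d \<or> b - a = d" and e: "a mod int N = b mod int N"
  then have "int N dvd (a - b)" by (simp add: mod_eq_dvd_iff)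
  then have "int N dvd d" using d(3) by (metis dvd_minus_iff minus_diff_eq)
  then have "int N \<le> d" using d(1) by (simp add: zdvd_imp_le)
  then show False using d(2) by simp
qed

lemma mirror:
  assumes N: "N \<ge> 4" and p: "per s N" and pm: "\<forall>i. s i = 1 \<or> s i = -1" and q: "q \<noteq> 0"
    and mn: "m * n \<noteq> 2" and A: "sA s N i i = 0" and G: "G = qE s N \<or> G = qF s N"
  shows "fadd (fst (qbr s N q (G i a) (qbr s N q (G (i - 1) c1) (qbr s N q (G i b) (G (i + 1) c2)))))
              (fst (qbr s N q (G i b) (qbr s N q (G (i - 1) c1) (qbr s N q (G i a) (G (i + 1) c2)))))
         \<in> tsideal N (rels s N m n d q)"
proof -
  have N0: "N > 0" using N by simp
  obtain Lf wG where Gf: "\<And>j x. G j x = (Lf j x, spar s j, wG j)"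
    and bf: "\<And>j k. bform s N (wG j) (wG k) = sA s N j k"
    and pf: "\<And>j x. fpoly N (Lf j x)"
    and sc: "\<And>j k x y. sA s N j k = 0 \<Longrightarrow> scomm (sgn2 (spar s j) (spar s k)) (Lf j x) (Lf k y) \<in> rels s N m n d q"
    using G_struct[OF p N0 G] by metis
  have n1: "i mod int N \<noteq> (i + 1) mod int N" "(i + 1) mod int N \<noteq> i mod int N"
    "i mod int N \<noteq> (i - 1) mod int N" "(i + 1) mod int N \<noteq> (i - 1) mod int N"
    "i mod int N \<noteq> (i + 2) mod int N" "(i - 1) mod int N \<noteq> (i + 1) mod int N"
    "(i - 1) mod int N \<noteq> (i + 2) mod int N" "(i - 1) mod int N \<noteq> (i + 1 + 1) mod int N"
    using modne[of 1 N i "i + 1"] modne[of 1 N "i + 1" i] modne[of 1 N i "i - 1"] modne[of 2 N "i + 1" "i - 1"]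
      modne[of 2 N i "i + 2"] modne[of 2 N "i - 1" "i + 1"] modne[of 3 N "i - 1" "i + 2"] modne[of 3 N "i - 1" "i + 1 + 1"] N
    by simp_all
  have sAii: "sA s N i i = s i + s (i + 1)" unfolding sA_def using n1 by simp
  have s1: "s (i + 1) = - s i" using A sAii by simp
  have a1: "sA s N i (i - 1) = - s i" unfolding sA_def using n1 by simp
  have a2: "sA s N i (i + 1) = s i" unfolding sA_def using n1 s1 by (simp add: add.commute)
  have a3: "sA s N (i - 1) i = - s i" using a1 sA_sym[OF p] by metis
  have a4: "sA s N (i + 1) i = s i" using a2 sA_sym[OF p] by metis
  have a5: "sA s N (i - 1) (i + 1) = 0" unfolding sA_def using n1 by (simp add: add.commute)
  have a6: "sA s N (i + 1) (i - 1) = 0" using a5 sA_sym[OF p] by metis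
  have spi: "spar s i = 1" using s1 pm[rule_format, of i] by (auto simp: spar_def)
  have spx: "spar s (i - 1) = 0 \<or> spar s (i - 1) = 1" using pm[rule_format, of "i - 1"] pm[rule_format, of "i - 1 + 1"]
    by (auto simp: spar_def)
  have spy: "spar s (i + 1) = 0 \<or> spar s (i + 1) = 1" using pm[rule_format, of "i + 1"] pm[rule_format, of "i + 1 + 1"]
    by (auto simp: spar_def)
  have R1: "fadd (fst (qbr s N q (G i a) (qbr s N q (G (i + 1) c2) (qbr s N q (G i b) (G (i - 1) c1)))))
              (fst (qbr s N q (G i b) (qbr s N q (G (i + 1) c2) (qbr s N q (G i a) (G (i - 1) c1))))) \<in> tsideal N (rels s N m n d q)"
    by (rule tsideal_rel1[OF M17[OF N0 p mn A G]])
  note R1s = R1[unfolded Gf qbr_def, simplified]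
  have rr: "fsub (fmul (Lf i a) (Lf i b)) (fsmul (-1) (fmul (Lf i b) (Lf i a))) \<in> rels s N m n d q"
    using sc[OF A, of a b] spi by (simp add: scomm_def sgn2_def)
  have tt: "fsub (fmul (Lf (i - 1) c1) (Lf (i + 1) c2)) (fsmul (sgn2 (spar s (i - 1)) (spar s (i + 1))) (fmul (Lf (i + 1) c2) (Lf (i - 1) c1))) \<in> rels s N m n d q"
    using sc[OF a5, of c1 c2] by (simp add: scomm_def)
  show ?thesis
    unfolding Gf qbr_def
    apply simp
    apply (rule mirror_mem[OF R1s rr tt pf pf pf pf])
    using spx spy pm[rule_format, of i] q
    apply (simp_all add: bform_add_r bform_add_l bf a1 a2 a3 a4 a5 a6 A spi)
    apply (auto simp: sgn2_def power_int_minus field_simps)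
    done
qed


lemma pm_sneg: "\<forall>i. s i = 1 \<or> s i = -1 \<Longrightarrow> \<forall>i. sneg s i = 1 \<or> sneg s i = -1"
  by (auto simp: sneg_def)

lemma I17:
  assumes N: "N \<ge> 4" and p: "per s N" and pm: "\<forall>i. s i = 1 \<or> s i = -1" and q: "q \<noteq> 0"
    and mn: "m * n \<noteq> 2" and A: "sA s N i i = 0" and G: "G = qE s N \<or> G = qF s N"
  shows "fext (phi N) (fadd (fst (qbr s N q (G i a) (qbr s N q (G (i + 1) c1) (qbr s N q (G i b) (G (i - 1) c2)))))
              (fst (qbr s N q (G i b) (qbr s N q (G (i + 1) c1) (qbr s N q (G i a) (G (i - 1) c2)))))) \<in> Tp s N m n d q"
proof -
  have N0: "N > 0" using N by simp
  obtain \<sigma> G' where G': "G' = qE (sneg s) N \<or> G' = qF (sneg s) N" and h: "\<And>i a. hsim N \<sigma> (G i a) (G' (- i) a)"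
    using hsim_G[OF G N0] by metis
  define i' where "i' = - i"
  have hm: "hsim N \<sigma> (G (i - 1) x) (G' (i' + 1) x)" for x using h[of "i - 1" x] by (simp add: i'_def)
  have hp: "hsim N \<sigma> (G (i + 1) x) (G' (i' - 1) x)" for x using h[of "i + 1" x] by (simp add: i'_def)
  have h0: "hsim N \<sigma> (G i x) (G' i' x)" for x using h[of i x] by (simp add: i'_def)
  note hq = hsim_qbr[OF p N0]
  let ?q = "qbr (sneg s) N (inverse q)"
  have t1: "hsim N (\<sigma> * (\<sigma> * (\<sigma> * \<sigma>))) (qbr s N q (G i a) (qbr s N q (G (i + 1) c1) (qbr s N q (G i b) (G (i - 1) c2))))
       (?q (G' i' a) (?q (G' (i' - 1) c1) (?q (G' i' b) (G' (i' + 1) c2))))"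
    by (rule hq[OF h0 hq[OF hp hq[OF h0 hm]]])
  have t2: "hsim N (\<sigma> * (\<sigma> * (\<sigma> * \<sigma>))) (qbr s N q (G i b) (qbr s N q (G (i + 1) c1) (qbr s N q (G i a) (G (i - 1) c2))))
       (?q (G' i' b) (?q (G' (i' - 1) c1) (?q (G' i' a) (G' (i' + 1) c2))))"
    by (rule hq[OF h0 hq[OF hp hq[OF h0 hm]]])
  have eq: "fext (phi N) (fadd (fst (qbr s N q (G i a) (qbr s N q (G (i + 1) c1) (qbr s N q (G i b) (G (i - 1) c2)))))
              (fst (qbr s N q (G i b) (qbr s N q (G (i + 1) c1) (qbr s N q (G i a) (G (i - 1) c2))))))
     = fsmul (\<sigma> * (\<sigma> * (\<sigma> * \<sigma>))) (fadd (fst (?q (G' i' a) (?q (G' (i' - 1) c1) (?q (G' i' b) (G' (i' + 1) c2)))))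
              (fst (?q (G' i' b) (?q (G' (i' - 1) c1) (?q (G' i' a) (G' (i' + 1) c2))))))"
  proof -
    have "fext (phi N) (fadd (fst (qbr s N q (G i a) (qbr s N q (G (i + 1) c1) (qbr s N q (G i b) (G (i - 1) c2)))))
              (fst (qbr s N q (G i b) (qbr s N q (G (i + 1) c1) (qbr s N q (G i a) (G (i - 1) c2))))))
      = fadd (fext (phi N) (fst (qbr s N q (G i a) (qbr s N q (G (i + 1) c1) (qbr s N q (G i b) (G (i - 1) c2))))))
             (fext (phi N) (fst (qbr s N q (G i b) (qbr s N q (G (i + 1) c1) (qbr s N q (G i a) (G (i - 1) c2))))))"
      using t1 t2 by (simp add: hsim_def fext_add)
    then show ?thesis using t1 t2 by (simp only: hsim_fst) (rule ext, simp add: app_simps algebra_simps)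
  qed
  have A': "sA (sneg s) N i' i' = 0" using A sA_sneg[OF p] by (simp add: i'_def)
  have mn': "n * m \<noteq> 2" using mn by (simp add: mult.commute)
  have q': "inverse q \<noteq> 0" using q by simp
  show ?thesis unfolding eq
    by (rule tsideal_smul[OF mirror[OF N per_sneg[OF p] pm_sneg[OF pm] q' mn' A' G']])
qed

lemma rel_image:
  assumes N3: "N \<ge> 3" and p: "per s N" and pm: "\<forall>i. s i = 1 \<or> s i = -1" and q: "q \<noteq> 0"
    and HC: "m * n \<noteq> 2 \<Longrightarrow> N = 3 \<Longrightarrow> \<forall>i. s (i + 1) = s i"
    and r: "r \<in> rels s N m n d q"
  shows "fext (phi N) r \<in> Tp s N m n d q"
proof -
  have N0: "N > 0" using N3 by simp
  have N4: "N \<ge> 4" if "m * n \<noteq> 2" "sA s N i i = 0" for i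
  proof (rule ccontr)
    assume "\<not> N \<ge> 4"
    then have N3': "N = 3" using N3 by simp
    then have c: "s (i + 1) = s i" using HC that(1) by blast
    have "i mod int N \<noteq> (i + 1) mod int N" "(i + 1) mod int N \<noteq> i mod int N"
      using modne[of 1 N i "i + 1"] modne[of 1 N "i + 1" i] N3 by simp_all
    then have "sA s N i i = s i + s (i + 1)" unfolding sA_def by simp
    then show False using that(2) c pm[rule_format, of i] by auto
  qed
  show ?thesis using r[unfolded rels_def Let_def]
    apply (elim UnE CollectE exE conjE)
    apply (simp_all only:)
    apply (rule I1[OF N0])
    apply (rule I2[OF N0])
    apply (rule I3[OF N0])
    apply (rule I4[OF N0 p])
    apply (rule I5[OF N0 p])
    apply (rule I6[OF N0])
    apply (rule I7[OF N0])
    apply (rule I8[OF N0])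
    apply (rule I9[OF N3 p], assumption)
    apply (rule I10[OF N3 p], assumption)
    apply (rule I11[OF N0 p], assumption, assumption)
    apply (rule I12[OF N0 p], assumption)
    apply (rule I13[OF N0 p], assumption)
    apply (rule I14[OF N3 p], assumption)
    apply (rule I15[OF N3 p], assumption)
    apply (rule I16[OF N0 p], assumption, assumption, assumption)
    apply (rule I17[OF N4 p pm q], assumption, assumption, assumption, assumption, assumption)
    apply (rule I18[OF N0 p], assumption, assumption, assumption)
    done
qed

lemma map_ideal:
  assumes N3: "N \<ge> 3" and p: "per s N" and pm: "\<forall>i. s i = 1 \<or> s i = -1" and q: "q \<noteq> 0"
    and HC: "m * n \<noteq> 2 \<Longrightarrow> N = 3 \<Longrightarrow> \<forall>i. s (i + 1) = s i"
    and x: "x \<in> tsideal N (rels s N m n d q)"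
  shows "fext (phi N) x \<in> Tp s N m n d q"
  using x
proof (induction rule: tsideal.induct)
  case zero then show ?case by (simp add: tsideal.zero)
next
  case (add x y)
  have "finite (fsupp x)" "finite (fsupp y)" using add.hyps tsideal_fin rels_fin by blast+
  then show ?case using add.IH by (simp add: fext_add tsideal.add)
next
  case (gen r a b)
  have N0: "N > 0" using N3 by simp
  have f: "finite (fsupp r)" "finite (fsupp a)" "finite (fsupp b)"
    using gen rels_fin fpoly_fin by blast+
  have "fext (phi N) (fmul a (fmul r b)) = fmul (fext (phi N) a) (fmul (fext (phi N) r) (fext (phi N) b))"
    using f by (simp add: fext_mul)
  moreover have "fext (phi N) r \<in> Tp s N m n d q" by (rule rel_image[OF N3 p pm q HC gen.hyps(1)])
  moreover have "fpoly N (fext (phi N) a)" "fpoly N (fext (phi N) b)"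
    using gen.hyps(2,3) fpoly_fext fpoly_phi[OF N0] by blast+
  ultimately show ?case by (simp add: tsideal_mul)
qed


lemma homog_phi:
  assumes p: "per s N" and N: "N > 0"
  shows "homog (sneg s) (gpar s g) (phi N g)"
  unfolding homog_def
proof (intro allI impI)
  fix w assume "phi N g w \<noteq> 0"
  then have w: "w = [psi N g]" by (simp add: phi_def app_simps split: if_splits)
  have "gpar (sneg s) (psi N g) = gpar s g"
  proof (cases g)
    case (GE i r)
    then show ?thesis using spar_cong[OF per_sneg[OF p], of "(- i) mod int N" "- i"] spar_sneg[of s i]
      by (simp add: gpar_def)
  next
    case (GF i r)
    then show ?thesis using spar_cong[OF per_sneg[OF p], of "(- i) mod int N" "- i"] spar_sneg[of s i]
      by (simp add: gpar_def)
  qed (simp_all add: gpar_def)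
  then show "wpar (sneg s) w = gpar s g mod 2" by (simp add: w wpar_def)
qed

lemma const_from_vals:
  assumes p: "per s 3" and c: "\<forall>i\<in>{1..3}. s i = c"
  shows "\<forall>i. s (i + 1) = s i"
proof -
  have all: "s j = c" for j
  proof -
    have r: "j mod 3 = 0 \<or> j mod 3 = 1 \<or> j mod 3 = 2" by presburger
    have sj: "s j = s (j mod 3)" using per_mod[OF p, of j] by simp
    have s0: "s 0 = s 3" using p[unfolded per_def, rule_format, of 0] by simp
    have c1: "s 1 = c" "s 2 = c" "s 3 = c" using c by simp_all
    from r show ?thesis
    proof (elim disjE)
      assume "j mod 3 = 0" then show ?thesis using sj s0 c1 by simp
    next
      assume "j mod 3 = 1" then show ?thesis using sj c1 by simp
    next
      assume "j mod 3 = 2" then show ?thesis using sj c1 by simp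
    qed
  qed
  then show ?thesis by simp
qed

lemma HC_from_card:
  assumes p: "per s (m + n)" and pm: "\<forall>i. s i = 1 \<or> s i = -1"
    and card: "card {i \<in> {1..int (m + n)}. s i = 1} = m"
  shows "m * n \<noteq> 2 \<Longrightarrow> m + n = 3 \<Longrightarrow> \<forall>i. s (i + 1) = s i"
proof -
  assume mn: "m * n \<noteq> 2" and N: "m + n = 3"
  have p3: "per s 3" using p N by simp
  have "m = 0 \<or> m = 3"
  proof -
    have "m \<le> 3" using N by simp
    then have "m = 0 \<or> m = 1 \<or> m = 2 \<or> m = 3" by auto
    then show ?thesis using mn N by auto
  qed
  then show ?thesis
  proof
    assume m0: "m = 0"
    have c0: "card {i \<in> {1..3::int}. s i = 1} = 0" using card m0 N by simp
    have "finite {i \<in> {1..3::int}. s i = 1}" by (rule finite_subset[of _ "{1..3}"]) auto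
    then have "{i \<in> {1..3::int}. s i = 1} = {}" using c0 by (simp only: card_0_eq)
    then have "\<forall>i\<in>{1..3}. s i = -1" using pm by auto
    then show ?thesis by (rule const_from_vals[OF p3])
  next
    assume m3: "m = 3"
    have fin: "finite {1..3::int}" by simp
    have "card {i \<in> {1..3::int}. s i = 1} = card {1..3::int}" using card m3 N by simp
    then have "{i \<in> {1..3::int}. s i = 1} = {1..3}"
      by (metis (no_types, lifting) card_subset_eq fin mem_Collect_eq subsetI)
    then have "\<forall>i\<in>{1..3}. s i = 1" by blast
    then show ?thesis by (rule const_from_vals[OF p3])
  qed
qed

lemma fadd_neg_self: "fadd (fsmul (-1) x) x = fzero"
  by (rule ext) (simp add: app_simps)

theorem lemma2p1:
  fixes m n :: nat and s :: "int \<Rightarrow> int" and d q :: complex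
  assumes "m \<noteq> n" and "m + n \<ge> 3"
    and "\<forall>i. s i = 1 \<or> s i = -1"
    and "\<forall>i. s (i + int (m + n)) = s i"
    and "card {i \<in> {1..int (m + n)}. s i = 1} = m"
    and "d \<noteq> 0" and "q \<noteq> 0"
    and "\<forall>a b c :: int. (d / q) powi a * (q ^ 2) powi b * (1 / (d * q)) powi c = 1
            \<longrightarrow> a = b \<and> b = c"
  shows "let N = m + n;
             s' = (\<lambda>i. - s (1 - i));
             I = tsideal N (rels s N m n d q);
             I' = tsideal N (rels s' N n m d (inverse q))
         in \<exists>f :: gen \<Rightarrow> fa.
              (\<forall>g. valid_gen N g \<longrightarrow> fpoly N (f g) \<and>
                   (\<exists>y. fpoly N y \<and> homog s' (gpar s g) y \<and> fsub (f g) y \<in> I'))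
            \<and> (\<forall>x \<in> I. fext f x \<in> I')
            \<and> (\<forall>x. fpoly N x \<longrightarrow> fext f x \<in> I' \<longrightarrow> x \<in> I)
            \<and> (\<forall>y. fpoly N y \<longrightarrow> (\<exists>x. fpoly N x \<and> fsub (fext f x) y \<in> I'))
            \<and> (\<forall>i \<in> {0..<int N}. \<forall>k :: int.
                  fsub (fext f (Ec N i k)) (Ec N (- i) k) \<in> I'
                \<and> fadd (fext f (Fc N i k)) (Fc N (- i) k) \<in> I'
                \<and> fsub (fext f (Kplus q N i k)) (Kplus (inverse q) N (- i) k) \<in> I'
                \<and> fsub (fext f (Kminus q N i k)) (Kminus (inverse q) N (- i) k) \<in> I')"
proof -
  define N where "N = m + n"
  have N3: "N \<ge> 3" using assms(2) by (simp add: N_def)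
  have N0: "N > 0" using N3 by simp
  have pm: "\<forall>i. s i = 1 \<or> s i = -1" by (rule assms(3))
  have p: "per s N" using assms(4) by (simp add: per_def N_def)
  have q: "q \<noteq> 0" by (rule assms(7))
  have HC: "m * n \<noteq> 2 \<Longrightarrow> N = 3 \<Longrightarrow> \<forall>i. s (i + 1) = s i"
    using HC_from_card[OF _ pm assms(5)] p by (simp add: N_def)
  have s'e: "(\<lambda>i. - s (1 - i)) = sneg s" by (simp add: sneg_def fun_eq_iff)
  let ?I = "tsideal N (rels s N m n d q)"
  let ?I' = "tsideal N (rels (sneg s) N n m d (inverse q))"
  have fwd: "x \<in> ?I \<Longrightarrow> fext (phi N) x \<in> ?I'" for x
    by (rule map_ideal[OF N3 p pm q HC])
  have HC': "n * m \<noteq> 2 \<Longrightarrow> N = 3 \<Longrightarrow> \<forall>i. sneg s (i + 1) = sneg s i"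
  proof -
    assume a: "n * m \<noteq> 2" "N = 3"
    then have c: "\<forall>i. s (i + 1) = s i" using HC by (simp add: mult.commute)
    show "\<forall>i. sneg s (i + 1) = sneg s i"
    proof
      fix i show "sneg s (i + 1) = sneg s i"
        using c[rule_format, of "- i"] by (simp add: sneg_def)
    qed
  qed
  have bwd: "x \<in> ?I' \<Longrightarrow> fext (phi N) x \<in> ?I" for x
  proof -
    assume x: "x \<in> ?I'"
    have "inverse q \<noteq> 0" using q by simp
    from map_ideal[where s="sneg s" and m=n and n=m and q="inverse q" and d=d and x=x, OF N3 per_sneg[OF p] pm_sneg[OF pm] this HC' x]
    show ?thesis by simp
  qed
  have z: "fzero \<in> ?I'" by (rule tsideal.zero)
  show ?thesis
    unfolding Let_def s'e N_def[symmetric]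
  proof (intro exI[of _ "phi N"] conjI allI impI ballI)
    fix g assume g: "valid_gen N g"
    show "fpoly N (phi N g)" by (rule fpoly_phi[OF N0 g])
    show "\<exists>y. fpoly N y \<and> homog (sneg s) (gpar s g) y \<and> fsub (phi N g) y \<in> ?I'"
      using fpoly_phi[OF N0 g] homog_phi[OF p N0] z by (auto simp: fsub_self)
  next
    fix x assume "x \<in> ?I" then show "fext (phi N) x \<in> ?I'" by (rule fwd)
  next
    fix x assume x: "fpoly N x" and xi: "fext (phi N) x \<in> ?I'"
    have "fext (phi N) (fext (phi N) x) \<in> ?I" by (rule bwd[OF xi])
    then show "x \<in> ?I" using fext_phi_phi[OF N0 x] by simp
  next
    fix y assume y: "fpoly N y"
    have py: "fpoly N (fext (phi N) y)" by (rule fpoly_fext[OF _ y]) (rule fpoly_phi[OF N0])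
    show "\<exists>x. fpoly N x \<and> fsub (fext (phi N) x) y \<in> ?I'"
      by (rule exI[of _ "fext (phi N) y"]) (simp add: py fext_phi_phi[OF N0 y] fsub_self z)
  next
    fix i k
    show "fsub (fext (phi N) (Ec N i k)) (Ec N (- i) k) \<in> ?I'" using z by (simp add: im_Ec fsub_self)
    show "fadd (fext (phi N) (Fc N i k)) (Fc N (- i) k) \<in> ?I'" using z by (simp add: im_Fc fadd_neg_self)
    show "fsub (fext (phi N) (Kplus q N i k)) (Kplus (inverse q) N (- i) k) \<in> ?I'" using z by (simp add: im_Kplus fsub_self)
    show "fsub (fext (phi N) (Kminus q N i k)) (Kminus (inverse q) N (- i) k) \<in> ?I'" using z by (simp add: im_Kminus fsub_self)
  qed
qed


end
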